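(* Let $S,T$ be totally ordered sets and $M\colon S\times T\to\mathbf{Vec}$ pointwise finite-dimensional, middle exact and indecomposable. If there exist $x\le x'$ in $S$ and $y\le y'$ in $T$ such that, with $a=(x,y)$, $b=(x,y')$, $c=(x',y)$, $\ker M(a\le b)\cap\ker M(a\le c)\neq0$, then $M\cong k_B$ for a block $B$ of type db.
   Context: $S\times T$ has the product order; modules are functors to $k$-vector spaces with structure maps $M(p\le q)$. Middle exact: for all $x\le x'$, $y\le y'$ with $a=(x,y),b=(x,y'),c=(x',y),d=(x',y')$, the sequence $M_a\to M_b\oplus M_c\to M_d$ with maps $(M(a\le b),M(a\le c))$ and $M(b\le d)-M(c\le d)$ is exact at the middle. A block of type db is a set $J_S\times J_T$ where $J_S\subseteq S$ and $J_T\subseteq T$ are non-empty downward-closed subsets. $k_B$ is $k$ on $B$, $0$ elsewhere, with identity maps within $B$ and zero otherwise. *)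

theory Defs
  imports Main HOL.Vector_Spaces "HOL-Library.Product_Order"
begin

text \<open>All the spaces M_p are realised as subspaces V p of one ambient k-vector space
  'v (with scalar multiplication scale); phi p q is the structure map M(p \<le> q).\<close>

definition linear_on :: "('k::field \<Rightarrow> 'v::ab_group_add \<Rightarrow> 'v) \<Rightarrow> ('k \<Rightarrow> 'w::ab_group_add \<Rightarrow> 'w)
    \<Rightarrow> 'v set \<Rightarrow> ('v \<Rightarrow> 'w) \<Rightarrow> bool" where
  "linear_on s1 s2 A f \<longleftrightarrow>
     (\<forall>u\<in>A. \<forall>w\<in>A. f (u + w) = f u + f w) \<and> (\<forall>c. \<forall>u\<in>A. f (s1 c u) = s2 c (f u))"

definition pmodule :: "('k::field \<Rightarrow> 'v::ab_group_add \<Rightarrow> 'v) \<Rightarrow> ('p::order \<Rightarrow> 'v set)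
    \<Rightarrow> ('p \<Rightarrow> 'p \<Rightarrow> 'v \<Rightarrow> 'v) \<Rightarrow> bool" where
  "pmodule s V phi \<longleftrightarrow>
     vector_space s \<and>
     (\<forall>p. module.subspace s (V p)) \<and>
     (\<forall>p q. p \<le> q \<longrightarrow> (\<forall>v\<in>V p. phi p q v \<in> V q) \<and> linear_on s s (V p) (phi p q)) \<and>
     (\<forall>p. \<forall>v\<in>V p. phi p p v = v) \<and>
     (\<forall>p q r. p \<le> q \<and> q \<le> r \<longrightarrow> (\<forall>v\<in>V p. phi q r (phi p q v) = phi p r v))"

definition pointwise_fin_dim :: "('k::field \<Rightarrow> 'v::ab_group_add \<Rightarrow> 'v) \<Rightarrow> ('p \<Rightarrow> 'v set) \<Rightarrow> bool" where
  "pointwise_fin_dim s V \<longleftrightarrow> (\<forall>p. \<exists>B. finite B \<and> B \<subseteq> V p \<and> module.span s B = V p)"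

definition middle_exact :: "('s::order \<times> 't::order \<Rightarrow> 'v::ab_group_add set)
    \<Rightarrow> ('s \<times> 't \<Rightarrow> 's \<times> 't \<Rightarrow> 'v \<Rightarrow> 'v) \<Rightarrow> bool" where
  "middle_exact V phi \<longleftrightarrow>
     (\<forall>x x' y y'. x \<le> x' \<and> y \<le> y' \<longrightarrow>
        (let a = (x, y); b = (x, y'); c = (x', y); d = (x', y') in
          {(u, w). u \<in> V b \<and> w \<in> V c \<and> phi b d u - phi c d w = 0}
          = {(phi a b v, phi a c v) | v. v \<in> V a}))"

definition submodule :: "('k::field \<Rightarrow> 'v::ab_group_add \<Rightarrow> 'v) \<Rightarrow> ('p::order \<Rightarrow> 'v set)
    \<Rightarrow> ('p \<Rightarrow> 'p \<Rightarrow> 'v \<Rightarrow> 'v) \<Rightarrow> ('p \<Rightarrow> 'v set) \<Rightarrow> bool" where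
  "submodule s V phi N \<longleftrightarrow>
     (\<forall>p. module.subspace s (N p) \<and> N p \<subseteq> V p) \<and>
     (\<forall>p q. p \<le> q \<longrightarrow> (\<forall>v\<in>N p. phi p q v \<in> N q))"

definition indecomposable :: "('k::field \<Rightarrow> 'v::ab_group_add \<Rightarrow> 'v) \<Rightarrow> ('p::order \<Rightarrow> 'v set)
    \<Rightarrow> ('p \<Rightarrow> 'p \<Rightarrow> 'v \<Rightarrow> 'v) \<Rightarrow> bool" where
  "indecomposable s V phi \<longleftrightarrow>
     (\<exists>p. V p \<noteq> {0}) \<and>
     (\<forall>N1 N2. submodule s V phi N1 \<and> submodule s V phi N2 \<and>
        (\<forall>p. N1 p \<inter> N2 p = {0} \<and> (\<forall>v\<in>V p. \<exists>u\<in>N1 p. \<exists>w\<in>N2 p. v = u + w))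
        \<longrightarrow> (\<forall>p. N1 p = {0}) \<or> (\<forall>p. N2 p = {0}))"

definition pmod_iso :: "('k::field \<Rightarrow> 'v::ab_group_add \<Rightarrow> 'v) \<Rightarrow> ('p::order \<Rightarrow> 'v set) \<Rightarrow> ('p \<Rightarrow> 'p \<Rightarrow> 'v \<Rightarrow> 'v)
    \<Rightarrow> ('k \<Rightarrow> 'w::ab_group_add \<Rightarrow> 'w) \<Rightarrow> ('p \<Rightarrow> 'w set) \<Rightarrow> ('p \<Rightarrow> 'p \<Rightarrow> 'w \<Rightarrow> 'w) \<Rightarrow> bool" where
  "pmod_iso s1 V phi s2 W psi \<longleftrightarrow>
     (\<exists>f. (\<forall>p. bij_betw (f p) (V p) (W p) \<and> linear_on s1 s2 (V p) (f p)) \<and>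
          (\<forall>p q. p \<le> q \<longrightarrow> (\<forall>v\<in>V p. f q (phi p q v) = psi p q (f p v))))"

definition kB_space :: "'p set \<Rightarrow> 'p \<Rightarrow> 'k::field set" where
  "kB_space B p = (if p \<in> B then UNIV else {0})"

definition kB_map :: "'p set \<Rightarrow> 'p \<Rightarrow> 'p \<Rightarrow> 'k::field \<Rightarrow> 'k" where
  "kB_map B p q = (\<lambda>x. if p \<in> B \<and> q \<in> B then x else 0)"

definition down_closed :: "'a::order set \<Rightarrow> bool" where
  "down_closed J \<longleftrightarrow> (\<forall>x\<in>J. \<forall>y. y \<le> x \<longrightarrow> y \<in> J)"

definition db_block :: "('s::order \<times> 't::order) set \<Rightarrow> bool" where
  "db_block B \<longleftrightarrow> (\<exists>JS JT. JS \<noteq> {} \<and> JT \<noteq> {} \<and> down_closed JS \<and> down_closed JT \<and> B = JS \<times> JT)"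

end

theory Submission
  imports Defs
begin


lemma zorn_pred:
  assumes refl: "\<And>a. a \<in> A \<Longrightarrow> P a a"
    and trans: "\<And>a b c. a \<in> A \<Longrightarrow> b \<in> A \<Longrightarrow> c \<in> A \<Longrightarrow> P a b \<Longrightarrow> P b c \<Longrightarrow> P a c"
    and anti: "\<And>a b. a \<in> A \<Longrightarrow> b \<in> A \<Longrightarrow> P a b \<Longrightarrow> P b a \<Longrightarrow> a = b"
    and ch: "\<And>C. C \<subseteq> A \<Longrightarrow> (\<forall>a\<in>C. \<forall>b\<in>C. P a b \<or> P b a) \<Longrightarrow> \<exists>u\<in>A. \<forall>a\<in>C. P a u"
  shows "\<exists>m\<in>A. \<forall>a\<in>A. P m a \<longrightarrow> a = m"
proof (rule predicate_Zorn)
  show "partial_order_on A (relation_of P A)"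
    by (rule partial_order_on_relation_ofI) (use refl trans anti in blast)+
next
  fix C assume C: "C \<in> Chains (relation_of P A)"
  have "C \<subseteq> A" using C unfolding Chains_def relation_of_def by auto
  moreover have "\<forall>a\<in>C. \<forall>b\<in>C. P a b \<or> P b a" using C unfolding Chains_def relation_of_def by auto
  ultimately show "\<exists>u\<in>A. \<forall>a\<in>C. P a u" using ch by blast
qed

lemma le_pair[simp]: "((a::'a::order, b::'b::order) \<le> (c, d)) = (a \<le> c \<and> b \<le> d)"
  by (simp add: less_eq_prod_def)

locale mx =
  fixes scale :: "'k::field \<Rightarrow> 'v::ab_group_add \<Rightarrow> 'v"
    and V :: "'s::linorder \<times> 't::linorder \<Rightarrow> 'v set"
    and phi :: "'s \<times> 't \<Rightarrow> 's \<times> 't \<Rightarrow> 'v \<Rightarrow> 'v"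
  assumes pm: "pmodule scale V phi"
    and pfd: "pointwise_fin_dim scale V"
    and me: "middle_exact V phi"
begin

sublocale vs: vector_space scale using pm unfolding pmodule_def by blast

lemma pmD: "vector_space scale \<and> (\<forall>p. vs.subspace (V p)) \<and>
     (\<forall>p q. p \<le> q \<longrightarrow> (\<forall>v\<in>V p. phi p q v \<in> V q) \<and> linear_on scale scale (V p) (phi p q)) \<and>
     (\<forall>p. \<forall>v\<in>V p. phi p p v = v) \<and>
     (\<forall>p q r. p \<le> q \<and> q \<le> r \<longrightarrow> (\<forall>v\<in>V p. phi q r (phi p q v) = phi p r v))"
  using pm unfolding pmodule_def .

lemma Vsub: "vs.subspace (V p)" using pmD[THEN conjunct2, THEN conjunct1] by (rule spec)
lemma V0[simp]: "0 \<in> V p" using Vsub vs.subspace_0 by blast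
lemma Vadd: "w \<in> V p \<Longrightarrow> w' \<in> V p \<Longrightarrow> w + w' \<in> V p" using Vsub vs.subspace_add by blast
lemma Vscale: "w \<in> V p \<Longrightarrow> scale c w \<in> V p" using Vsub vs.subspace_scale by blast
lemma Vdiff: "w \<in> V p \<Longrightarrow> w' \<in> V p \<Longrightarrow> w - w' \<in> V p" using Vsub vs.subspace_diff by blast

lemma phiV: "p \<le> q \<Longrightarrow> w \<in> V p \<Longrightarrow> phi p q w \<in> V q"
  using pmD[THEN conjunct2, THEN conjunct2, THEN conjunct1] by blast
lemma phi_lin: "p \<le> q \<Longrightarrow> linear_on scale scale (V p) (phi p q)"
  using pmD[THEN conjunct2, THEN conjunct2, THEN conjunct1] by blast
lemma phi_add: assumes "p \<le> q" "w \<in> V p" "w' \<in> V p" shows "phi p q (w + w') = phi p q w + phi p q w'"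
proof -
  have L: "\<forall>u\<in>V p. \<forall>w\<in>V p. phi p q (u + w) = phi p q u + phi p q w"
    using phi_lin[OF assms(1)] unfolding linear_on_def by (rule conjunct1)
  show ?thesis using bspec[OF bspec[OF L assms(2)] assms(3)] .
qed
lemma phi_scale: assumes "p \<le> q" "w \<in> V p" shows "phi p q (scale c w) = scale c (phi p q w)"
proof -
  have L: "\<forall>c. \<forall>u\<in>V p. phi p q (scale c u) = scale c (phi p q u)"
    using phi_lin[OF assms(1)] unfolding linear_on_def by (rule conjunct2)
  show ?thesis using bspec[OF spec[OF L] assms(2)] .
qed
lemma phi0[simp]: "p \<le> q \<Longrightarrow> phi p q 0 = 0"
proof -
  assume "p \<le> q"
  then have "phi p q (0 + 0) = phi p q 0 + phi p q 0" using phi_add V0 by blast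
  then show ?thesis by simp
qed
lemma phi_diff: "p \<le> q \<Longrightarrow> w \<in> V p \<Longrightarrow> w' \<in> V p \<Longrightarrow> phi p q (w - w') = phi p q w - phi p q w'"
proof -
  assume a: "p \<le> q" "w \<in> V p" "w' \<in> V p"
  have "phi p q w = phi p q ((w - w') + w')" by simp
  also have "\<dots> = phi p q (w - w') + phi p q w'" using a Vdiff phi_add by blast
  finally show ?thesis by (simp add: algebra_simps)
qed
lemma phi_id: "w \<in> V p \<Longrightarrow> phi p p w = w"
  using pmD[THEN conjunct2, THEN conjunct2, THEN conjunct2, THEN conjunct1] by blast
lemma phi_comp: assumes "p \<le> q" "q \<le> r" "w \<in> V p" shows "phi q r (phi p q w) = phi p r w"
proof -
  have L: "\<forall>p q r. p \<le> q \<and> q \<le> r \<longrightarrow> (\<forall>v\<in>V p. phi q r (phi p q v) = phi p r v)"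
    using pmD by (elim conjE)
  show ?thesis using bspec[OF mp[OF spec[OF spec[OF spec[OF L]]] conjI[OF assms(1,2)]] assms(3)] .
qed

lemma me_lift:
  assumes "x \<le> x'" "y \<le> y'" "u \<in> V (x,y')" "w \<in> V (x',y)"
    and "phi (x,y') (x',y') u = phi (x',y) (x',y') w"
  shows "\<exists>z\<in>V (x,y). phi (x,y) (x,y') z = u \<and> phi (x,y) (x',y) z = w"
proof -
  have E: "{(u, w). u \<in> V (x,y') \<and> w \<in> V (x',y) \<and> phi (x,y') (x',y') u - phi (x',y) (x',y') w = 0}
     = {(phi (x,y) (x,y') v, phi (x,y) (x',y) v) | v. v \<in> V (x,y)}"
    using me[unfolded middle_exact_def Let_def, rule_format, OF conjI[OF assms(1,2)]] .
  have "(u, w) \<in> {(u, w). u \<in> V (x,y') \<and> w \<in> V (x',y) \<and> phi (x,y') (x',y') u - phi (x',y) (x',y') w = 0}"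
    using assms(3,4,5) by simp
  then have "(u, w) \<in> {(phi (x,y) (x,y') v, phi (x,y) (x',y) v) | v. v \<in> V (x,y)}"
    unfolding E .
  then show ?thesis by auto
qed

lemma pfdW: obtains W where "finite W" "W \<subseteq> V p" "vs.span W = V p"
  using pfd unfolding pointwise_fin_dim_def by blast

lemma sub_eq_dim:
  assumes U: "vs.subspace U" and U': "vs.subspace U'" and sub: "U \<subseteq> U'" and W: "U' \<subseteq> vs.span W" "finite W"
    and d: "vs.dim U' \<le> vs.dim U"
  shows "U = U'"
proof (rule ccontr)
  assume ne: "U \<noteq> U'"
  then obtain a where a: "a \<in> U'" "a \<notin> U" using sub by blast
  obtain B where B: "B \<subseteq> U" "vs.independent B" "U \<subseteq> vs.span B" "card B = vs.dim U"
    using vs.basis_exists by blast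
  have fB: "finite B" using vs.independent_span_bound[OF W(2) B(2)] B(1) sub W(1) by blast
  have "vs.span B \<subseteq> U" using B(1) U by (simp add: vs.span_minimal)
  then have spB: "vs.span B = U" using B(3) by (rule antisym)
  have anB: "a \<notin> vs.span B" using a(2) spB by simp
  have ind: "vs.independent (insert a B)" using vs.independent_insertI[OF anB B(2)] .
  obtain C where C: "C \<subseteq> U'" "vs.independent C" "U' \<subseteq> vs.span C" "card C = vs.dim U'"
    using vs.basis_exists by blast
  have fC: "finite C" using vs.independent_span_bound[OF W(2) C(2)] C(1) W(1) by blast
  have "insert a B \<subseteq> vs.span C" using a(1) B(1) sub C(3) by blast
  then have "card (insert a B) \<le> card C" using vs.independent_span_bound[OF fC ind] by blast
  moreover have "a \<notin> B" using a(2) B(1) by blast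
  then have "card (insert a B) = card B + 1" using fB by simp
  ultimately show False using B(4) C(4) d by simp
qed

end


context mx begin

definition aff :: "'v set \<Rightarrow> bool" where "aff A \<longleftrightarrow> (\<exists>z U. vs.subspace U \<and> A = (+) z ` U)"
definition dir :: "'v set \<Rightarrow> 'v set" where "dir A = {b - c | b c. b \<in> A \<and> c \<in> A}"

lemma aff_rep: assumes "vs.subspace U" "A = (+) z ` U" shows "dir A = U" "z \<in> A"
proof -
  show "z \<in> A" using assms vs.subspace_0[OF assms(1)] by force
  show "dir A = U"
  proof
    show "dir A \<subseteq> U"
    proof
      fix d assume "d \<in> dir A"
      then obtain b c where "d = b - c" "b \<in> A" "c \<in> A" unfolding dir_def by blast
      then obtain u1 u2 where "u1 \<in> U" "u2 \<in> U" "b = z + u1" "c = z + u2" using assms by blast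
      then have "d = u1 - u2" using \<open>d = b - c\<close> by simp
      then show "d \<in> U" using vs.subspace_diff[OF assms(1)] \<open>u1 \<in> U\<close> \<open>u2 \<in> U\<close> by simp
    qed
    show "U \<subseteq> dir A"
    proof
      fix u assume "u \<in> U"
      have "z + u \<in> A" "z + 0 \<in> A" using assms \<open>u \<in> U\<close> vs.subspace_0[OF assms(1)] by blast+
      moreover have "u = (z + u) - (z + 0)" by simp
      ultimately show "u \<in> dir A" unfolding dir_def by blast
    qed
  qed
qed

lemma aff_ne: "aff A \<Longrightarrow> A \<noteq> {}"
  unfolding aff_def using aff_rep(2) by blast

lemma aff_dir_sub: "aff A \<Longrightarrow> vs.subspace (dir A)"
  unfolding aff_def using aff_rep(1) by metis

lemma aff_at: assumes "aff A" "a \<in> A" shows "A = (+) a ` dir A"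
proof -
  obtain z U where zU: "vs.subspace U" "A = (+) z ` U" using assms(1) unfolding aff_def by blast
  have D: "dir A = U" using aff_rep[OF zU] by simp
  obtain u0 where u0: "u0 \<in> U" "a = z + u0" using assms(2) zU by blast
  show ?thesis
  proof
    show "A \<subseteq> (+) a ` dir A"
    proof
      fix b assume "b \<in> A"
      then obtain u where u: "u \<in> U" "b = z + u" using zU by blast
      have "u - u0 \<in> U" using vs.subspace_diff[OF zU(1) u(1) u0(1)] .
      moreover have "b = a + (u - u0)" using u u0 by (simp add: algebra_simps)
      ultimately show "b \<in> (+) a ` dir A" using D by blast
    qed
    show "(+) a ` dir A \<subseteq> A"
    proof
      fix b assume "b \<in> (+) a ` dir A"
      then obtain u where u: "u \<in> U" "b = a + u" using D by blast
      have "u0 + u \<in> U" using vs.subspace_add[OF zU(1) u0(1) u(1)] .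
      moreover have "b = z + (u0 + u)" using u u0 by (simp add: algebra_simps)
      ultimately show "b \<in> A" using zU by blast
    qed
  qed
qed

lemma dir_mono: "C \<subseteq> A \<Longrightarrow> dir C \<subseteq> dir A"
  unfolding dir_def by blast

lemma aff_eq_dir: assumes "aff A" "aff C" "C \<subseteq> A" "dir C = dir A" shows "C = A"
proof -
  obtain c where c: "c \<in> C" using aff_ne[OF assms(2)] by blast
  have "C = (+) c ` dir C" using aff_at[OF assms(2) c] .
  also have "\<dots> = (+) c ` dir A" using assms(4) by simp
  also have "\<dots> = A" using aff_at[OF assms(1)] c assms(3) by blast
  finally show ?thesis .
qed

lemma dir_V: "A \<subseteq> V p \<Longrightarrow> dir A \<subseteq> V p"
  unfolding dir_def using Vdiff by blast

lemma aff_min: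
  assumes F: "F \<noteq> {}" and FA: "\<And>A. A \<in> F \<Longrightarrow> aff A \<and> A \<subseteq> V p"
    and dirF: "\<And>A B. A \<in> F \<Longrightarrow> B \<in> F \<Longrightarrow> \<exists>C\<in>F. C \<subseteq> A \<and> C \<subseteq> B"
  shows "\<exists>A0\<in>F. \<forall>A\<in>F. A0 \<subseteq> A"
proof -
  obtain A1 where "A1 \<in> F" using F by blast
  then obtain A0 where A0: "A0 \<in> F" "\<forall>A. A \<in> F \<longrightarrow> vs.dim (dir A0) \<le> vs.dim (dir A)"
    using ex_has_least_nat[of "\<lambda>A. A \<in> F" A1 "\<lambda>A. vs.dim (dir A)"] by blast
  obtain W where W: "finite W" "W \<subseteq> V p" "vs.span W = V p" by (rule pfdW)
  have "\<forall>A\<in>F. A0 \<subseteq> A"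
  proof
    fix A assume A: "A \<in> F"
    obtain C where C: "C \<in> F" "C \<subseteq> A0" "C \<subseteq> A" using dirF[OF A0(1) A] by blast
    have "dir C = dir A0"
    proof (rule sub_eq_dim)
      show "vs.subspace (dir C)" using aff_dir_sub FA C(1) by blast
      show "vs.subspace (dir A0)" using aff_dir_sub FA A0(1) by blast
      show "dir C \<subseteq> dir A0" using dir_mono C(2) .
      show "dir A0 \<subseteq> vs.span W" using dir_V FA A0(1) W(3) by blast
      show "finite W" using W(1) .
      show "vs.dim (dir A0) \<le> vs.dim (dir C)" using A0(2) C(1) by blast
    qed
    then have "C = A0" using aff_eq_dir FA A0(1) C(1) C(2) by blast
    then show "A0 \<subseteq> A" using C(3) by simp
  qed
  then show ?thesis using A0(1) by blast
qed

lemma aff_Inter: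
  assumes F: "F \<noteq> {}" and FA: "\<And>A. A \<in> F \<Longrightarrow> aff A \<and> A \<subseteq> V p"
    and dirF: "\<And>A B. A \<in> F \<Longrightarrow> B \<in> F \<Longrightarrow> \<exists>C\<in>F. C \<subseteq> A \<and> C \<subseteq> B"
  shows "aff (\<Inter>F)" "\<Inter>F \<subseteq> V p"
proof -
  obtain A0 where A0: "A0 \<in> F" "\<forall>A\<in>F. A0 \<subseteq> A" using aff_min[OF F FA dirF] by blast
  have "\<Inter>F = A0" using A0 by blast
  then show "aff (\<Inter>F)" "\<Inter>F \<subseteq> V p" using FA A0(1) by auto
qed

lemma aff_subspace: "vs.subspace U \<Longrightarrow> aff U"
  unfolding aff_def by (rule exI[of _ 0], rule exI[of _ U]) simp

lemma subspace_phi_image: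
  assumes U: "vs.subspace U" "U \<subseteq> V p" and pq: "p \<le> q"
  shows "vs.subspace (phi p q ` U)"
  unfolding vs.subspace_def
proof (intro conjI ballI allI)
  show "0 \<in> phi p q ` U" using vs.subspace_0[OF U(1)] phi0[OF pq] by force
  fix x y assume "x \<in> phi p q ` U" "y \<in> phi p q ` U"
  then obtain u w where "u \<in> U" "w \<in> U" "x = phi p q u" "y = phi p q w" by blast
  moreover have "u \<in> V p" "w \<in> V p" using \<open>u \<in> U\<close> \<open>w \<in> U\<close> U(2) by blast+
  ultimately have "x + y = phi p q (u + w)" using phi_add[OF pq] by simp
  then show "x + y \<in> phi p q ` U" using vs.subspace_add[OF U(1) \<open>u \<in> U\<close> \<open>w \<in> U\<close>] by blast
next
  fix c x assume "x \<in> phi p q ` U"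
  then obtain u where "u \<in> U" "x = phi p q u" by blast
  then have "scale c x = phi p q (scale c u)" using phi_scale[OF pq] U(2) by auto
  then show "scale c x \<in> phi p q ` U" using vs.subspace_scale[OF U(1) \<open>u \<in> U\<close>] by blast
qed

lemma aff_image: assumes A: "aff A" "A \<subseteq> V p" and pq: "p \<le> q" shows "aff (phi p q ` A)"
proof -
  obtain a where a: "a \<in> A" using aff_ne[OF A(1)] by blast
  have Ae: "A = (+) a ` dir A" using aff_at[OF A(1) a] .
  have dV: "dir A \<subseteq> V p" using dir_V[OF A(2)] .
  have aV: "a \<in> V p" using a A(2) by blast
  have "phi p q ` A = (+) (phi p q a) ` (phi p q ` dir A)"
  proof -
    have "phi p q ` A = phi p q ` ((+) a ` dir A)" using Ae by simp
    also have "\<dots> = (\<lambda>u. phi p q (a + u)) ` dir A" by (simp add: image_image)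
    also have "\<dots> = (\<lambda>u. phi p q a + phi p q u) ` dir A"
      using phi_add[OF pq aV] dV by (intro image_cong) auto
    also have "\<dots> = (+) (phi p q a) ` (phi p q ` dir A)" by (simp add: image_image)
    finally show ?thesis .
  qed
  moreover have "vs.subspace (phi p q ` dir A)"
    using subspace_phi_image[OF aff_dir_sub[OF A(1)] dV pq] .
  ultimately show ?thesis unfolding aff_def by blast
qed

lemma aff_fiber:
  assumes A: "aff A" "A \<subseteq> V r" and rs: "r \<le> s" and w0: "w0 \<in> A"
  shows "aff (A \<inter> {w. phi r s w = phi r s w0})"
proof -
  define U' where "U' = {u \<in> dir A. phi r s u = 0}"
  have dV: "dir A \<subseteq> V r" using dir_V[OF A(2)] .
  have w0V: "w0 \<in> V r" using w0 A(2) by blast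
  have sub: "vs.subspace U'"
    unfolding U'_def vs.subspace_def
  proof (intro conjI ballI allI)
    show "0 \<in> {u \<in> dir A. phi r s u = 0}" using vs.subspace_0[OF aff_dir_sub[OF A(1)]] rs by simp
    fix x y assume "x \<in> {u \<in> dir A. phi r s u = 0}" "y \<in> {u \<in> dir A. phi r s u = 0}"
    moreover have "x \<in> V r" "y \<in> V r" using calculation dV by blast+
    ultimately show "x + y \<in> {u \<in> dir A. phi r s u = 0}"
      using vs.subspace_add[OF aff_dir_sub[OF A(1)]] phi_add[OF rs] by auto
  next
    fix c x assume "x \<in> {u \<in> dir A. phi r s u = 0}"
    then show "scale c x \<in> {u \<in> dir A. phi r s u = 0}"
      using vs.subspace_scale[OF aff_dir_sub[OF A(1)]] phi_scale[OF rs] dV by auto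
  qed
  have Ae: "A = (+) w0 ` dir A" using aff_at[OF A(1) w0] .
  have "A \<inter> {w. phi r s w = phi r s w0} = (+) w0 ` U'"
  proof
    show "A \<inter> {w. phi r s w = phi r s w0} \<subseteq> (+) w0 ` U'"
    proof
      fix w assume w: "w \<in> A \<inter> {w. phi r s w = phi r s w0}"
      then obtain u where u: "u \<in> dir A" "w = w0 + u" using Ae by blast
      have "phi r s w = phi r s w0 + phi r s u" using u phi_add[OF rs w0V] dV by auto
      then have "phi r s u = 0" using w by simp
      then show "w \<in> (+) w0 ` U'" using u unfolding U'_def by blast
    qed
    show "(+) w0 ` U' \<subseteq> A \<inter> {w. phi r s w = phi r s w0}"
    proof
      fix w assume "w \<in> (+) w0 ` U'"
      then obtain u where u: "u \<in> dir A" "phi r s u = 0" "w = w0 + u" unfolding U'_def by blast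
      have "w \<in> A" using Ae u by blast
      moreover have "phi r s w = phi r s w0" using u phi_add[OF rs w0V] dV by auto
      ultimately show "w \<in> A \<inter> {w. phi r s w = phi r s w0}" by blast
    qed
  qed
  then show ?thesis unfolding aff_def using sub by blast
qed

end


context mx begin

lemma invlim_ex:
  assumes Dd: "\<And>p q. p \<in> D \<Longrightarrow> q \<in> D \<Longrightarrow> \<exists>r\<in>D. r \<le> p \<and> r \<le> q"
    and A0: "\<And>p. p \<in> D \<Longrightarrow> aff (A0 p) \<and> A0 p \<subseteq> V p"
    and A0c: "\<And>p q. p \<in> D \<Longrightarrow> q \<in> D \<Longrightarrow> p \<le> q \<Longrightarrow> phi p q ` A0 p \<subseteq> A0 q"
  shows "\<exists>f. (\<forall>p\<in>D. f p \<in> A0 p) \<and> (\<forall>p\<in>D. \<forall>q\<in>D. p \<le> q \<longrightarrow> phi p q (f p) = f q)"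
proof -
  define Fam where "Fam = {A. (\<forall>p\<in>D. aff (A p) \<and> A p \<subseteq> A0 p) \<and>
      (\<forall>p\<in>D. \<forall>q\<in>D. p \<le> q \<longrightarrow> phi p q ` A p \<subseteq> A q) \<and> (\<forall>p. p \<notin> D \<longrightarrow> A p = {})}"
  define P where "P = (\<lambda>A B. \<forall>p::'s\<times>'t. B p \<subseteq> (A p :: 'v set))"
  define A0' where "A0' = (\<lambda>p. if p \<in> D then A0 p else {})"
  have FamI: "A \<in> Fam" if "\<And>p. p \<in> D \<Longrightarrow> aff (A p)" "\<And>p. p \<in> D \<Longrightarrow> A p \<subseteq> A0 p"
      "\<And>p q. p \<in> D \<Longrightarrow> q \<in> D \<Longrightarrow> p \<le> q \<Longrightarrow> phi p q ` A p \<subseteq> A q" "\<And>p. p \<notin> D \<Longrightarrow> A p = {}" for A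
    unfolding Fam_def using that by simp
  have FamD1: "aff (A p)" if "A \<in> Fam" "p \<in> D" for A p using that unfolding Fam_def by simp
  have FamD2: "A p \<subseteq> A0 p" if "A \<in> Fam" "p \<in> D" for A p using that unfolding Fam_def by simp
  have FamD3: "phi p q ` A p \<subseteq> A q" if "A \<in> Fam" "p \<in> D" "q \<in> D" "p \<le> q" for A p q
    using that unfolding Fam_def by simp
  have FamD4: "A p = {}" if "A \<in> Fam" "p \<notin> D" for A p
  proof -
    have "\<forall>p. p \<notin> D \<longrightarrow> A p = {}" using that(1) unfolding Fam_def mem_Collect_eq by (elim conjE)
    then show ?thesis using that(2) by blast
  qed
  have A0'F: "A0' \<in> Fam"
  proof (rule FamI)
    show "aff (A0' p)" if "p \<in> D" for p using A0 that unfolding A0'_def by simp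
    show "A0' p \<subseteq> A0 p" if "p \<in> D" for p using that unfolding A0'_def by simp
    show "phi p q ` A0' p \<subseteq> A0' q" if "p \<in> D" "q \<in> D" "p \<le> q" for p q
      using A0c[OF that] that unfolding A0'_def by simp
    show "A0' p = {}" if "p \<notin> D" for p using that unfolding A0'_def by simp
  qed
  have FamV: "A p \<subseteq> V p" if "A \<in> Fam" "p \<in> D" for A p
    using FamD2[OF that] A0[OF that(2)] by blast
  have "\<exists>m\<in>Fam. \<forall>a\<in>Fam. P m a \<longrightarrow> a = m"
  proof (rule zorn_pred)
    show "\<And>a. a \<in> Fam \<Longrightarrow> P a a" unfolding P_def by blast
    show "\<And>a b c. P a b \<Longrightarrow> P b c \<Longrightarrow> P a c" unfolding P_def by blast
    show "\<And>a b. P a b \<Longrightarrow> P b a \<Longrightarrow> a = b" unfolding P_def by (rule ext, blast)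
  next
    fix C assume CF: "C \<subseteq> Fam" and ch: "\<forall>a\<in>C. \<forall>b\<in>C. P a b \<or> P b a"
    show "\<exists>u\<in>Fam. \<forall>a\<in>C. P a u"
    proof (cases "C = {}")
      case True then show ?thesis using A0'F by blast
    next
      case False
      then obtain A1 where A1: "A1 \<in> C" by blast
      define u where "u = (\<lambda>p. \<Inter>A\<in>C. A p)"
      have "u \<in> Fam"
      proof (rule FamI)
        fix p assume p: "p \<in> D"
        have F1: "(\<lambda>A. A p) ` C \<noteq> {}" using False by simp
        have F2: "aff X \<and> X \<subseteq> V p" if X: "X \<in> (\<lambda>A. A p) ` C" for X
        proof -
          obtain A where "A \<in> C" "X = A p" using X by blast
          then show ?thesis using FamD1[of A p] FamV[of A p] CF p by blast
        qed
        have F3: "\<exists>Y\<in>(\<lambda>A. A p) ` C. Y \<subseteq> X1 \<and> Y \<subseteq> X2" if X: "X1 \<in> (\<lambda>A. A p) ` C" "X2 \<in> (\<lambda>A. A p) ` C" for X1 X2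
        proof -
          obtain B1 B2 where B: "B1 \<in> C" "X1 = B1 p" "B2 \<in> C" "X2 = B2 p" using X by blast
          have "P B1 B2 \<or> P B2 B1" using ch B by blast
          then show ?thesis
          proof
            assume "P B1 B2" then have "B2 p \<subseteq> B1 p" unfolding P_def by blast
            then show ?thesis using B by blast
          next
            assume "P B2 B1" then have "B1 p \<subseteq> B2 p" unfolding P_def by blast
            then show ?thesis using B by blast
          qed
        qed
        show "aff (u p)" unfolding u_def using aff_Inter(1)[OF F1 F2 F3] by blast
        have "u p \<subseteq> A1 p" unfolding u_def using A1 by blast
        then show "u p \<subseteq> A0 p" using FamD2[of A1 p] CF A1 p by blast
      next
        fix p q assume pq: "p \<in> D" "q \<in> D" "p \<le> q"
        show "phi p q ` u p \<subseteq> u q"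
        proof
          fix x assume "x \<in> phi p q ` u p"
          then obtain w where w: "w \<in> u p" "x = phi p q w" by blast
          have "x \<in> A q" if "A \<in> C" for A
          proof -
            have "w \<in> A p" using w(1) that unfolding u_def by blast
            then show ?thesis using FamD3[of A p q] CF that pq w(2) by blast
          qed
          then show "x \<in> u q" unfolding u_def by blast
        qed
      next
        fix p assume p: "p \<notin> D"
        have "u p \<subseteq> A1 p" unfolding u_def using A1 by blast
        then show "u p = {}" using FamD4[of A1 p] CF A1 p by blast
      qed
      moreover have "\<forall>a\<in>C. P a u" unfolding P_def u_def by blast
      ultimately show ?thesis by blast
    qed
  qed
  then obtain M where MF: "M \<in> Fam" and Mmin: "\<And>A. A \<in> Fam \<Longrightarrow> (\<forall>p. A p \<subseteq> M p) \<Longrightarrow> A = M"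
    unfolding P_def by blast
  have Maff: "aff (M p)" "M p \<subseteq> A0 p" if "p \<in> D" for p using FamD1[OF MF that] FamD2[OF MF that] by simp_all
  have MV: "M p \<subseteq> V p" if "p \<in> D" for p using FamV MF that by blast
  have Mc: "phi p q ` M p \<subseteq> M q" if "p \<in> D" "q \<in> D" "p \<le> q" for p q using FamD3[OF MF that] .
  have Mout: "M p = {}" if "p \<notin> D" for p using FamD4[OF MF that] .
  have Mid: "phi p p ` M p = M p" if "p \<in> D" for p
  proof -
    have "phi p p ` M p = id ` M p"
    proof (rule image_cong)
      fix x assume "x \<in> M p"
      then have "x \<in> V p" using MV[OF that] by blast
      then show "phi p p x = id x" using phi_id by simp
    qed simp
    then show ?thesis by simp
  qed
  have step1: "M p \<subseteq> phi r p ` M r" if "p \<in> D" "r \<in> D" "r \<le> p" for p r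
  proof -
    define FB where "FB = (\<lambda>p. {phi r p ` M r | r. r \<in> D \<and> r \<le> p})"
    define B where "B = (\<lambda>p. if p \<in> D then \<Inter>(FB p) else {})"
    have FBprops: "FB p \<noteq> {} \<and> (\<forall>A\<in>FB p. aff A \<and> A \<subseteq> V p) \<and>
        (\<forall>A\<in>FB p. \<forall>B\<in>FB p. \<exists>C\<in>FB p. C \<subseteq> A \<and> C \<subseteq> B)" if p: "p \<in> D" for p
    proof (intro conjI ballI)
      show "FB p \<noteq> {}" unfolding FB_def using p by blast
    next
      fix A assume "A \<in> FB p"
      then obtain r where r: "r \<in> D" "r \<le> p" "A = phi r p ` M r" unfolding FB_def by blast
      show "aff A" using aff_image[OF Maff(1)[OF r(1)] MV[OF r(1)] r(2)] r(3) by simp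
      show "A \<subseteq> V p" using r MV phiV by blast
    next
      fix A B assume "A \<in> FB p" "B \<in> FB p"
      then obtain r1 r2 where r: "r1 \<in> D" "r1 \<le> p" "A = phi r1 p ` M r1" "r2 \<in> D" "r2 \<le> p" "B = phi r2 p ` M r2"
        unfolding FB_def by blast
      obtain r3 where r3: "r3 \<in> D" "r3 \<le> r1" "r3 \<le> r2" using Dd[OF r(1) r(4)] by blast
      have sub: "phi r3 p ` M r3 \<subseteq> phi r' p ` M r'" if "r' \<in> D" "r' \<le> p" "r3 \<le> r'" for r'
      proof
        fix x assume "x \<in> phi r3 p ` M r3"
        then obtain w where w: "w \<in> M r3" "x = phi r3 p w" by blast
        have "x = phi r' p (phi r3 r' w)" using phi_comp[OF that(3) that(2)] w MV[OF r3(1)] by auto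
        moreover have "phi r3 r' w \<in> M r'" using Mc[OF r3(1) that(1) that(3)] w(1) by blast
        ultimately show "x \<in> phi r' p ` M r'" by blast
      qed
      have "r3 \<le> p" using order_trans[OF r3(2) r(2)] .
      then have "phi r3 p ` M r3 \<in> FB p" unfolding FB_def using r3(1) by blast
      then show "\<exists>C\<in>FB p. C \<subseteq> A \<and> C \<subseteq> B" using sub[OF r(1,2) r3(2)] sub[OF r(4,5) r3(3)] r(3,6) by blast
    qed
    have "B \<in> Fam"
    proof (rule FamI)
      fix p assume p: "p \<in> D"
      have FBp: "FB p \<noteq> {}" "\<And>A. A \<in> FB p \<Longrightarrow> aff A \<and> A \<subseteq> V p"
          "\<And>A B. A \<in> FB p \<Longrightarrow> B \<in> FB p \<Longrightarrow> \<exists>C\<in>FB p. C \<subseteq> A \<and> C \<subseteq> B"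
        using FBprops[OF p] by blast+
      show "aff (B p)" unfolding B_def using p aff_Inter(1)[OF FBp] by simp
      have "M p \<in> FB p"
      proof -
        have "phi p p ` M p \<in> FB p" unfolding FB_def using p by blast
        then show ?thesis using Mid[OF p] by simp
      qed
      then show "B p \<subseteq> A0 p" unfolding B_def using p Maff(2)[OF p] by auto
    next
      fix p q assume pq: "p \<in> D" "q \<in> D" "p \<le> q"
      show "phi p q ` B p \<subseteq> B q"
      proof
        fix x assume "x \<in> phi p q ` B p"
        then obtain w where w: "w \<in> B p" "x = phi p q w" by blast
        have "x \<in> A" if A: "A \<in> FB q" for A
        proof -
          obtain r where r: "r \<in> D" "r \<le> q" "A = phi r q ` M r" using A unfolding FB_def by blast
          obtain r' where r': "r' \<in> D" "r' \<le> r" "r' \<le> p" using Dd[OF r(1) pq(1)] by blast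
          have "phi r' p ` M r' \<in> FB p" unfolding FB_def using r' by blast
          then have "w \<in> phi r' p ` M r'" using w(1) pq(1) unfolding B_def by auto
          then obtain w0 where w0: "w0 \<in> M r'" "w = phi r' p w0" by blast
          have w0V: "w0 \<in> V r'" using w0(1) MV[OF r'(1)] by blast
          have "x = phi r' q w0" using w(2) w0(2) phi_comp[OF r'(3) pq(3) w0V] by simp
          also have "\<dots> = phi r q (phi r' r w0)" using phi_comp[OF r'(2) r(2) w0V] by simp
          finally have "x = phi r q (phi r' r w0)" .
          moreover have "phi r' r w0 \<in> M r" using Mc[OF r'(1) r(1) r'(2)] w0(1) by blast
          ultimately show "x \<in> A" using r(3) by blast
        qed
        then show "x \<in> B q" unfolding B_def using pq(2) by auto
      qed
    next
      fix p assume "p \<notin> D" then show "B p = {}" unfolding B_def by simp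
    qed
    moreover have "\<forall>p. B p \<subseteq> M p"
    proof
      fix p show "B p \<subseteq> M p"
      proof (cases "p \<in> D")
        case True
        have "M p \<in> FB p"
        proof -
          have "phi p p ` M p \<in> FB p" unfolding FB_def using True by blast
          then show ?thesis using Mid[OF True] by simp
        qed
        then show ?thesis unfolding B_def using True by auto
      qed (simp add: B_def)
    qed
    ultimately have BM: "B = M" using Mmin by blast
    have "phi r p ` M r \<in> FB p" unfolding FB_def using that by blast
    then have "B p \<subseteq> phi r p ` M r" unfolding B_def using that(1) by (simp add: Inter_lower)
    then show ?thesis using BM by simp
  qed
  have step2: "M p0 \<subseteq> {z}" if p0: "p0 \<in> D" and z: "z \<in> M p0" for p0 z
  proof -
    define FC where "FC = (\<lambda>p. {phi r p ` (M r \<inter> {w. phi r p0 w = z}) | r. r \<in> D \<and> r \<le> p \<and> r \<le> p0})"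
    define C where "C = (\<lambda>p. if p \<in> D then \<Inter>(FC p) else {})"
    have fibne: "\<exists>w\<in>M r. phi r p0 w = z" if "r \<in> D" "r \<le> p0" for r
      using step1[OF p0 that] z by blast
    have FCprops: "FC p \<noteq> {} \<and> (\<forall>A\<in>FC p. aff A \<and> A \<subseteq> V p) \<and>
        (\<forall>A\<in>FC p. \<forall>B\<in>FC p. \<exists>C\<in>FC p. C \<subseteq> A \<and> C \<subseteq> B)" if p: "p \<in> D" for p
    proof (intro conjI ballI)
      obtain r where "r \<in> D" "r \<le> p" "r \<le> p0" using Dd[OF p p0] by blast
      then show "FC p \<noteq> {}" unfolding FC_def by blast
    next
      fix A assume "A \<in> FC p"
      then obtain r where r: "r \<in> D" "r \<le> p" "r \<le> p0" "A = phi r p ` (M r \<inter> {w. phi r p0 w = z})"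
        unfolding FC_def by blast
      obtain w0 where w0: "w0 \<in> M r" "phi r p0 w0 = z" using fibne[OF r(1,3)] by blast
      have "aff (M r \<inter> {w. phi r p0 w = phi r p0 w0})"
        using aff_fiber[OF Maff(1)[OF r(1)] MV[OF r(1)] r(3) w0(1)] .
      then have "aff (M r \<inter> {w. phi r p0 w = z})" using w0(2) by simp
      then show "aff A" using aff_image[of _ r p] MV[OF r(1)] r(2,4) by blast
      show "A \<subseteq> V p" using r MV phiV by blast
    next
      fix A B assume "A \<in> FC p" "B \<in> FC p"
      then obtain r1 r2 where r: "r1 \<in> D" "r1 \<le> p" "r1 \<le> p0" "A = phi r1 p ` (M r1 \<inter> {w. phi r1 p0 w = z})"
          "r2 \<in> D" "r2 \<le> p" "r2 \<le> p0" "B = phi r2 p ` (M r2 \<inter> {w. phi r2 p0 w = z})"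
        unfolding FC_def by blast
      obtain r3 where r3: "r3 \<in> D" "r3 \<le> r1" "r3 \<le> r2" using Dd[OF r(1) r(5)] by blast
      have sub: "phi r3 p ` (M r3 \<inter> {w. phi r3 p0 w = z}) \<subseteq> phi r' p ` (M r' \<inter> {w. phi r' p0 w = z})"
        if "r' \<in> D" "r' \<le> p" "r' \<le> p0" "r3 \<le> r'" for r'
      proof
        fix x assume "x \<in> phi r3 p ` (M r3 \<inter> {w. phi r3 p0 w = z})"
        then obtain w where w: "w \<in> M r3" "phi r3 p0 w = z" "x = phi r3 p w" by blast
        have wV: "w \<in> V r3" using w(1) MV[OF r3(1)] by blast
        have "x = phi r' p (phi r3 r' w)" using phi_comp[OF that(4) that(2) wV] w by auto
        moreover have "phi r3 r' w \<in> M r'" using Mc[OF r3(1) that(1) that(4)] w(1) by blast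
        moreover have "phi r' p0 (phi r3 r' w) = z" using phi_comp[OF that(4) that(3) wV] w(2) by simp
        ultimately show "x \<in> phi r' p ` (M r' \<inter> {w. phi r' p0 w = z})" by blast
      qed
      have "r3 \<le> p" "r3 \<le> p0" using order_trans[OF r3(2) r(2)] order_trans[OF r3(2) r(3)] by simp_all
      then have "phi r3 p ` (M r3 \<inter> {w. phi r3 p0 w = z}) \<in> FC p" unfolding FC_def using r3(1) by blast
      then show "\<exists>C\<in>FC p. C \<subseteq> A \<and> C \<subseteq> B" using sub[OF r(1,2,3) r3(2)] sub[OF r(5,6,7) r3(3)] r(4,8) by blast
    qed
    have "C \<in> Fam"
    proof (rule FamI)
      fix p assume p: "p \<in> D"
      have FCp: "FC p \<noteq> {}" "\<And>A. A \<in> FC p \<Longrightarrow> aff A \<and> A \<subseteq> V p"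
          "\<And>A B. A \<in> FC p \<Longrightarrow> B \<in> FC p \<Longrightarrow> \<exists>C\<in>FC p. C \<subseteq> A \<and> C \<subseteq> B"
        using FCprops[OF p] by blast+
      show "aff (C p)" unfolding C_def using p aff_Inter(1)[OF FCp] by simp
      obtain r where r: "r \<in> D" "r \<le> p" "r \<le> p0" using Dd[OF p p0] by blast
      have "phi r p ` (M r \<inter> {w. phi r p0 w = z}) \<subseteq> M p" using Mc[OF r(1) p r(2)] by blast
      moreover have "phi r p ` (M r \<inter> {w. phi r p0 w = z}) \<in> FC p" unfolding FC_def using r by blast
      then have "C p \<subseteq> phi r p ` (M r \<inter> {w. phi r p0 w = z})" unfolding C_def using p by (simp add: Inter_lower)
      ultimately show "C p \<subseteq> A0 p" using Maff(2)[OF p] by blast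
    next
      fix p q assume pq: "p \<in> D" "q \<in> D" "p \<le> q"
      show "phi p q ` C p \<subseteq> C q"
      proof
        fix x assume "x \<in> phi p q ` C p"
        then obtain w where w: "w \<in> C p" "x = phi p q w" by blast
        have "x \<in> A" if A: "A \<in> FC q" for A
        proof -
          obtain r where r: "r \<in> D" "r \<le> q" "r \<le> p0" "A = phi r q ` (M r \<inter> {w. phi r p0 w = z})"
            using A unfolding FC_def by blast
          obtain r' where r': "r' \<in> D" "r' \<le> r" "r' \<le> p" using Dd[OF r(1) pq(1)] by blast
          have r'p0: "r' \<le> p0" using r'(2) r(3) by (rule order_trans)
          have "phi r' p ` (M r' \<inter> {w. phi r' p0 w = z}) \<in> FC p" unfolding FC_def using r' r'p0 by blast
          then have "w \<in> phi r' p ` (M r' \<inter> {w. phi r' p0 w = z})" using w(1) pq(1) unfolding C_def by auto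
          then obtain w0 where w0: "w0 \<in> M r'" "phi r' p0 w0 = z" "w = phi r' p w0" by blast
          have w0V: "w0 \<in> V r'" using w0(1) MV[OF r'(1)] by blast
          have "x = phi r' q w0" using w(2) w0(3) phi_comp[OF r'(3) pq(3) w0V] by simp
          also have "\<dots> = phi r q (phi r' r w0)" using phi_comp[OF r'(2) r(2) w0V] by simp
          finally have "x = phi r q (phi r' r w0)" .
          moreover have "phi r' r w0 \<in> M r" using Mc[OF r'(1) r(1) r'(2)] w0(1) by blast
          moreover have "phi r p0 (phi r' r w0) = z" using phi_comp[OF r'(2) r(3) w0V] w0(2) by simp
          ultimately show "x \<in> A" using r(4) by blast
        qed
        then show "x \<in> C q" unfolding C_def using pq(2) by auto
      qed
    next
      fix p assume "p \<notin> D" then show "C p = {}" unfolding C_def by simp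
    qed
    moreover have "\<forall>p. C p \<subseteq> M p"
    proof
      fix p show "C p \<subseteq> M p"
      proof (cases "p \<in> D")
        case True
        obtain r where r: "r \<in> D" "r \<le> p" "r \<le> p0" using Dd[OF True p0] by blast
        have "phi r p ` (M r \<inter> {w. phi r p0 w = z}) \<subseteq> M p" using Mc[OF r(1) True r(2)] by blast
        moreover have "phi r p ` (M r \<inter> {w. phi r p0 w = z}) \<in> FC p" unfolding FC_def using r by blast
        then have "C p \<subseteq> phi r p ` (M r \<inter> {w. phi r p0 w = z})" unfolding C_def using True by (simp add: Inter_lower)
        ultimately show ?thesis by blast
      qed (simp add: C_def)
    qed
    ultimately have CM: "C = M" using Mmin by blast
    have "phi p0 p0 ` (M p0 \<inter> {w. phi p0 p0 w = z}) \<in> FC p0" unfolding FC_def using p0 by blast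
    then have "C p0 \<subseteq> phi p0 p0 ` (M p0 \<inter> {w. phi p0 p0 w = z})" unfolding C_def using p0 by (simp add: Inter_lower)
    then have "M p0 \<subseteq> phi p0 p0 ` (M p0 \<inter> {w. phi p0 p0 w = z})" using CM by simp
    then show ?thesis by blast
  qed
  define f where "f = (\<lambda>p. SOME w. w \<in> M p)"
  have fM: "f p \<in> M p" if "p \<in> D" for p
    unfolding f_def using aff_ne[OF Maff(1)[OF that]] by (simp add: some_in_eq)
  have "\<forall>p\<in>D. f p \<in> A0 p" using fM Maff(2) by blast
  moreover have "\<forall>p\<in>D. \<forall>q\<in>D. p \<le> q \<longrightarrow> phi p q (f p) = f q"
  proof (intro ballI impI)
    fix p q assume "p \<in> D" "q \<in> D" "p \<le> q"
    then have "phi p q (f p) \<in> M q" using Mc fM by blast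
    then show "phi p q (f p) = f q" using step2[OF \<open>q \<in> D\<close> fM[OF \<open>q \<in> D\<close>]] by blast
  qed
  ultimately show ?thesis by blast
qed

end


context mx begin

lemma ker_sub:
  assumes "\<And>q. q \<in> Q \<Longrightarrow> p \<le> q"
  shows "vs.subspace {w \<in> V p. \<forall>q\<in>Q. phi p q w = 0}"
  unfolding vs.subspace_def
proof (intro conjI ballI allI)
  show "0 \<in> {w \<in> V p. \<forall>q\<in>Q. phi p q w = 0}" using assms by simp
next
  fix w w' assume w: "w \<in> {w \<in> V p. \<forall>q\<in>Q. phi p q w = 0}" and w': "w' \<in> {w \<in> V p. \<forall>q\<in>Q. phi p q w = 0}"
  have "w + w' \<in> V p" using w w' Vadd by blast
  moreover have "\<forall>q\<in>Q. phi p q (w + w') = 0"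
  proof
    fix q assume q: "q \<in> Q"
    have "phi p q (w + w') = phi p q w + phi p q w'" using phi_add[OF assms[OF q]] w w' by blast
    then show "phi p q (w + w') = 0" using w w' q by simp
  qed
  ultimately show "w + w' \<in> {w \<in> V p. \<forall>q\<in>Q. phi p q w = 0}" by blast
next
  fix c w assume w: "w \<in> {w \<in> V p. \<forall>q\<in>Q. phi p q w = 0}"
  have "scale c w \<in> V p" using w Vscale by blast
  moreover have "\<forall>q\<in>Q. phi p q (scale c w) = 0"
  proof
    fix q assume q: "q \<in> Q"
    have "phi p q (scale c w) = scale c (phi p q w)" using phi_scale[OF assms[OF q]] w by blast
    then show "phi p q (scale c w) = 0" using w q by simp
  qed
  ultimately show "scale c w \<in> {w \<in> V p. \<forall>q\<in>Q. phi p q w = 0}" by blast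
qed

lemma L1:
  assumes xx: "x \<le> x'" and yy: "y \<le> y'" and v: "v \<in> V (x,y)" "v \<noteq> 0" "phi (x,y) (x,y') v = 0" "phi (x,y) (x',y) v = 0"
  shows "\<exists>u\<in>V (x,y). u \<noteq> 0 \<and> phi (x,y) (x,y') u = 0 \<and> phi (x,y) (x',y) u = 0 \<and>
     (\<forall>s t. x \<le> s \<longrightarrow> y \<le> t \<longrightarrow> phi (x,y) (s,y) u \<noteq> 0 \<longrightarrow> phi (x,y) (x,t) u \<noteq> 0 \<longrightarrow> phi (x,y) (s,t) u \<noteq> 0)"
proof -
  define a where "a = (x,y)"
  define W where "W = (\<lambda>s. {w \<in> V a. \<forall>q\<in>{(s,y),(x,y')}. phi a q w = 0})"
  have Wsub: "vs.subspace (W s)" if "x \<le> s" for s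
    unfolding W_def by (rule ker_sub) (use that yy in \<open>auto simp: a_def\<close>)
  have WV: "W s \<subseteq> V a" for s unfolding W_def by blast
  have Wmono: "W s1 \<subseteq> W s2" if "x \<le> s1" "s1 \<le> s2" for s1 s2
  proof
    fix w assume w: "w \<in> W s1"
    have wV: "w \<in> V a" using w unfolding W_def by blast
    have "phi a (s2,y) w = phi (s1,y) (s2,y) (phi a (s1,y) w)"
      using phi_comp[of a "(s1,y)" "(s2,y)" w] that wV by (simp add: a_def)
    also have "\<dots> = 0" using w that unfolding W_def by simp
    finally show "w \<in> W s2" using w unfolding W_def by simp
  qed
  define F where "F = {W s | s. x \<le> s \<and> W s \<noteq> {0}}"
  have vW: "v \<in> W x'" unfolding W_def a_def using v by simp
  have WxF: "W x' \<in> F" unfolding F_def using xx vW v(2) by blast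
  have "\<exists>A0\<in>F. \<forall>A\<in>F. A0 \<subseteq> A"
  proof (rule aff_min[of F a])
    show "F \<noteq> {}" using WxF by blast
    show "aff A \<and> A \<subseteq> V a" if A: "A \<in> F" for A
    proof -
      obtain s where "A = W s" "x \<le> s" using A unfolding F_def by blast
      then show ?thesis using Wsub WV aff_subspace by simp
    qed
    show "\<exists>C\<in>F. C \<subseteq> A \<and> C \<subseteq> B" if AB: "A \<in> F" "B \<in> F" for A B
    proof -
      obtain s1 where s1: "A = W s1" "x \<le> s1" using AB(1) unfolding F_def by blast
      obtain s2 where s2: "B = W s2" "x \<le> s2" using AB(2) unfolding F_def by blast
      note s = s1(1,2) s1(2) s2(1,2) s2(2)
      show ?thesis
      proof (cases "s1 \<le> s2")
        case True
        have "W s1 \<subseteq> W s2" using Wmono[OF s(2) True] .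
        then show ?thesis using s(1,4) AB(1) by blast
      next
        case False then have "s2 \<le> s1" by simp
        have "W s2 \<subseteq> W s1" using Wmono[OF s(5) \<open>s2 \<le> s1\<close>] .
        then show ?thesis using s(1,4) AB(2) by blast
      qed
    qed
  qed
  then obtain A0 where A0: "A0 \<in> F" "\<And>A. A \<in> F \<Longrightarrow> A0 \<subseteq> A" by blast
  then obtain s0 where s0': "A0 = W s0" "x \<le> s0" "W s0 \<noteq> {0}" unfolding F_def by blast
  have s0: "x \<le> s0" "W s0 \<noteq> {0}" "\<And>A. A \<in> F \<Longrightarrow> W s0 \<subseteq> A" using s0' A0(2) by auto
  have "\<exists>u\<in>W s0. u \<noteq> 0"
  proof (rule ccontr)
    assume "\<not> (\<exists>u\<in>W s0. u \<noteq> 0)"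
    then have "W s0 \<subseteq> {0}" by blast
    moreover have "0 \<in> W s0" using vs.subspace_0[OF Wsub[OF s0(1)]] .
    ultimately have "W s0 = {0}" by blast
    then show False using s0(2) by simp
  qed
  then obtain u where u: "u \<in> W s0" "u \<noteq> 0" by blast
  have uV: "u \<in> V a" using u WV by blast
  have ub: "phi a (x,y') u = 0" using u unfolding W_def by simp
  have "u \<in> W x'" using s0(3)[OF WxF] u by blast
  then have uc: "phi a (x',y) u = 0" unfolding W_def by simp
  have key: "W s = {0}" if "x \<le> s" "phi a (s,y) u \<noteq> 0" for s
  proof (rule ccontr)
    assume "W s \<noteq> {0}"
    then have "W s \<in> F" unfolding F_def using that(1) by blast
    then have "u \<in> W s" using s0(3) u by blast
    then show False using that(2) unfolding W_def by simp
  qed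
  have prod: "phi a (s,t) u \<noteq> 0" if st: "x \<le> s" "y \<le> t" "phi a (s,y) u \<noteq> 0" "phi a (x,t) u \<noteq> 0" for s t
  proof
    assume eq0: "phi a (s,t) u = 0"
    have "t \<le> y'"
    proof (rule ccontr)
      assume "\<not> t \<le> y'"
      then have "y' \<le> t" by simp
      then have "phi a (x,t) u = phi (x,y') (x,t) (phi a (x,y') u)"
        using phi_comp[of a "(x,y')" "(x,t)" u] uV yy by (simp add: a_def)
      then show False using st(4) ub \<open>y' \<le> t\<close> by simp
    qed
    have uxt: "phi a (x,t) u \<in> V (x,t)" using phiV[of a "(x,t)"] uV st by (simp add: a_def)
    have "phi (x,t) (s,t) (phi a (x,t) u) = phi (s,y) (s,t) 0"
      using phi_comp[of a "(x,t)" "(s,t)" u] uV st eq0 by (simp add: a_def)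
    then obtain z where z: "z \<in> V (x,y)" "phi (x,y) (x,t) z = phi a (x,t) u" "phi (x,y) (s,y) z = 0"
      using me_lift[OF st(1) st(2) uxt V0] by blast
    have "phi a (x,y') z = phi (x,t) (x,y') (phi a (x,t) z)"
      using phi_comp[of a "(x,t)" "(x,y')" z] z(1) st \<open>t \<le> y'\<close> by (simp add: a_def)
    also have "\<dots> = phi (x,t) (x,y') (phi a (x,t) u)" using z(2) by (simp add: a_def)
    also have "\<dots> = phi a (x,y') u"
      using phi_comp[of a "(x,t)" "(x,y')" u] uV st \<open>t \<le> y'\<close> by (simp add: a_def)
    finally have "phi a (x,y') z = 0" using ub by simp
    then have "z \<in> W s" unfolding W_def using z by (simp add: a_def)
    then have "z = 0" using key[OF st(1) st(3)] by blast
    then have "phi a (x,t) u = 0" using z(2) st by (simp add: a_def)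
    then show False using st(4) by simp
  qed
  show ?thesis using uV u(2) ub uc prod unfolding a_def by blast
qed

end


context mx begin

lemma L2:
  assumes xx: "x \<le> x'" and yy: "y \<le> y'" and uV: "u \<in> V (x,y)" and u0: "u \<noteq> 0"
    and ub: "phi (x,y) (x,y') u = 0" and uc: "phi (x,y) (x',y) u = 0"
    and prod: "\<forall>s t. x \<le> s \<longrightarrow> y \<le> t \<longrightarrow> phi (x,y) (s,y) u \<noteq> 0 \<longrightarrow> phi (x,y) (x,t) u \<noteq> 0 \<longrightarrow> phi (x,y) (s,t) u \<noteq> 0"
  shows "\<exists>JS JT f. JS \<noteq> {} \<and> JT \<noteq> {} \<and> down_closed JS \<and> down_closed JT \<and> (\<forall>p. f p \<in> V p) \<and>
     (\<forall>p q. p \<le> q \<longrightarrow> phi p q (f p) = f q) \<and> (\<forall>p. (p \<in> JS \<times> JT) = (f p \<noteq> 0))"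
proof -
  define a where "a = (x,y)"
  define JS where "JS = {s. s \<le> x \<or> phi a (s,y) u \<noteq> 0}"
  define JT where "JT = {t. t \<le> y \<or> phi a (x,t) u \<noteq> 0}"
  define D where "D = JS \<times> JT"
  have uaV: "u \<in> V a" using uV by (simp add: a_def)
  have JSnz: "phi a (s,y) u \<noteq> 0" if "s \<in> JS" "x \<le> s" for s
  proof (cases "s \<le> x")
    case True then have "s = x" using that(2) by simp
    then show ?thesis using phi_id[OF uaV] u0 by (simp add: a_def)
  next
    case False then show ?thesis using that(1) unfolding JS_def by simp
  qed
  have JTnz: "phi a (x,t) u \<noteq> 0" if "t \<in> JT" "y \<le> t" for t
  proof (cases "t \<le> y")
    case True then have "t = y" using that(2) by simp
    then show ?thesis using phi_id[OF uaV] u0 by (simp add: a_def)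
  next
    case False then show ?thesis using that(1) unfolding JT_def by simp
  qed
  have JSdown: "s1 \<in> JS" if "s \<in> JS" "s1 \<le> s" for s s1
  proof (cases "s1 \<le> x")
    case True then show ?thesis unfolding JS_def by simp
  next
    case False
    then have xs1: "x \<le> s1" by simp
    have xs: "x \<le> s" using xs1 that(2) by (rule order_trans)
    have "phi a (s,y) u = phi (s1,y) (s,y) (phi a (s1,y) u)"
      using phi_comp[of a "(s1,y)" "(s,y)" u] uaV xs1 that(2) by (simp add: a_def)
    moreover have "phi a (s,y) u \<noteq> 0" using JSnz[OF that(1) xs] .
    ultimately have "phi a (s1,y) u \<noteq> 0" using that(2) by auto
    then show ?thesis unfolding JS_def by simp
  qed
  have JTdown: "t1 \<in> JT" if "t \<in> JT" "t1 \<le> t" for t t1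
  proof (cases "t1 \<le> y")
    case True then show ?thesis unfolding JT_def by simp
  next
    case False
    then have yt1: "y \<le> t1" by simp
    have yt: "y \<le> t" using yt1 that(2) by (rule order_trans)
    have "phi a (x,t) u = phi (x,t1) (x,t) (phi a (x,t1) u)"
      using phi_comp[of a "(x,t1)" "(x,t)" u] uaV yt1 that(2) by (simp add: a_def)
    moreover have "phi a (x,t) u \<noteq> 0" using JTnz[OF that(1) yt] .
    ultimately have "phi a (x,t1) u \<noteq> 0" using that(2) by auto
    then show ?thesis unfolding JT_def by simp
  qed
  have xJS: "x \<in> JS" unfolding JS_def by simp
  have yJT: "y \<in> JT" unfolding JT_def by simp
  have x'JS: "x' \<notin> JS"
  proof
    assume "x' \<in> JS"
    then have "phi a (x',y) u \<noteq> 0" using JSnz xx by blast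
    then show False using uc by (simp add: a_def)
  qed
  have y'JT: "y' \<notin> JT"
  proof
    assume "y' \<in> JT"
    then have "phi a (x,y') u \<noteq> 0" using JTnz yy by blast
    then show False using ub by (simp add: a_def)
  qed
  have gtJS: "s \<le> \<sigma>" if "s \<in> JS" "\<sigma> \<notin> JS" for s \<sigma>
  proof (rule ccontr)
    assume "\<not> s \<le> \<sigma>" then have "\<sigma> \<le> s" by simp
    then show False using JSdown[OF that(1)] that(2) by blast
  qed
  have gtJT: "t \<le> \<tau>" if "t \<in> JT" "\<tau> \<notin> JT" for t \<tau>
  proof (rule ccontr)
    assume "\<not> t \<le> \<tau>" then have "\<tau> \<le> t" by simp
    then show False using JTdown[OF that(1)] that(2) by blast
  qed
  have Dmem: "((s,t) \<in> D) = (s \<in> JS \<and> t \<in> JT)" for s t by (simp add: D_def)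
  have Ddown: "p \<in> D" if "p \<le> q" "q \<in> D" for p q
  proof -
    obtain s t where q: "q = (s,t)" by (cases q)
    obtain s0 t0 where p: "p = (s0,t0)" by (cases p)
    show ?thesis using that JSdown JTdown unfolding p q Dmem by auto
  qed
  define jn where "jn = (\<lambda>p::'s\<times>'t. (max (fst p) x, max (snd p) y))"
  have jnD: "jn p \<in> D" if "p \<in> D" for p
  proof -
    obtain s t where p: "p = (s,t)" by (cases p)
    have "max s x \<in> JS" using that xJS unfolding p Dmem by (simp add: max_def)
    moreover have "max t y \<in> JT" using that yJT unfolding p Dmem by (simp add: max_def)
    ultimately show ?thesis unfolding jn_def p by (simp add: Dmem)
  qed
  have jn_ge: "p \<le> jn p" "a \<le> jn p" for p
    unfolding jn_def a_def by (cases p, simp)+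
  have jn_mono: "jn p \<le> jn q" if "p \<le> q" for p q
    using that unfolding jn_def by (cases p, cases q) (auto simp: max_def)
  have ujn: "phi a (jn p) u \<noteq> 0" if "p \<in> D" for p
  proof -
    obtain s t where p: "p = (s,t)" by (cases p)
    have j: "jn p = (max s x, max t y)" unfolding jn_def p by simp
    have m1: "max s x \<in> JS" "x \<le> max s x" using that xJS unfolding p Dmem by (auto simp: max_def)
    have m2: "max t y \<in> JT" "y \<le> max t y" using that yJT unfolding p Dmem by (auto simp: max_def)
    have "phi a (max s x, y) u \<noteq> 0" using JSnz[OF m1] .
    moreover have "phi a (x, max t y) u \<noteq> 0" using JTnz[OF m2] .
    ultimately have "phi a (max s x, max t y) u \<noteq> 0" using prod m1(2) m2(2) unfolding a_def by blast
    then show ?thesis using j by simp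
  qed
  define X where "X = (\<lambda>p. {w \<in> V p. \<forall>q\<in>{q. p \<le> q \<and> q \<notin> D}. phi p q w = 0})"
  have Xsub: "vs.subspace (X p)" for p unfolding X_def by (rule ker_sub) simp
  have XV: "X p \<subseteq> V p" for p unfolding X_def by blast
  have XD: "phi p q w = 0" if "w \<in> X p" "p \<le> q" "q \<notin> D" for p q w
    using that unfolding X_def by blast
  have XI: "w \<in> X p" if "w \<in> V p" "\<And>q. p \<le> q \<Longrightarrow> q \<notin> D \<Longrightarrow> phi p q w = 0" for p w
    using that unfolding X_def by blast
  have Xmap: "phi p q w \<in> X q" if "p \<le> q" "w \<in> X p" for p q w
  proof (rule XI)
    have wV: "w \<in> V p" using that(2) XV by blast
    show "phi p q w \<in> V q" using phiV[OF that(1) wV] .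
    fix r assume r: "q \<le> r" "r \<notin> D"
    have pr: "p \<le> r" using that(1) r(1) by (rule order_trans)
    have "phi q r (phi p q w) = phi p r w" using phi_comp[OF that(1) r(1) wV] .
    then show "phi q r (phi p q w) = 0" using XD[OF that(2) pr r(2)] by simp
  qed
  have uX: "u \<in> X a"
  proof (rule XI[OF uaV])
    fix q assume q: "a \<le> q" "q \<notin> D"
    obtain \<sigma> \<tau> where qq: "q = (\<sigma>,\<tau>)" by (cases q)
    have le: "x \<le> \<sigma>" "y \<le> \<tau>" using q(1) unfolding qq a_def by simp_all
    show "phi a q u = 0"
    proof (cases "\<sigma> \<in> JS")
      case False
      then have z: "phi a (\<sigma>,y) u = 0" unfolding JS_def by simp
      have "phi a q u = phi (\<sigma>,y) q (phi a (\<sigma>,y) u)"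
        using phi_comp[of a "(\<sigma>,y)" q u] uaV le unfolding qq a_def by simp
      then show ?thesis using z le unfolding qq by simp
    next
      case True
      then have "\<tau> \<notin> JT" using q(2) unfolding qq Dmem by simp
      then have z: "phi a (x,\<tau>) u = 0" unfolding JT_def by simp
      have "phi a q u = phi (x,\<tau>) q (phi a (x,\<tau>) u)"
        using phi_comp[of a "(x,\<tau>)" q u] uaV le unfolding qq a_def by simp
      then show ?thesis using z le unfolding qq by simp
    qed
  qed
  have hor: "\<exists>z\<in>X (s0,t). phi (s0,t) (s,t) z = w"
    if h: "s0 \<in> JS" "s \<in> JS" "t \<in> JT" "s0 \<le> s" "w \<in> X (s,t)" for s0 s t w
  proof -
    define K where "K = (\<lambda>\<tau>. {w \<in> V (s0,t). \<forall>q\<in>{(s0,\<tau>)}. phi (s0,t) q w = 0})"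
    have Ksub: "vs.subspace (K \<tau>)" if "\<tau> \<notin> JT" for \<tau>
      unfolding K_def by (rule ker_sub) (use gtJT[OF h(3) that] in simp)
    have KV: "K \<tau> \<subseteq> V (s0,t)" for \<tau> unfolding K_def by blast
    have Kmono: "K \<tau>1 \<subseteq> K \<tau>2" if "\<tau>1 \<notin> JT" "\<tau>1 \<le> \<tau>2" for \<tau>1 \<tau>2
    proof
      fix w assume w: "w \<in> K \<tau>1"
      have wV: "w \<in> V (s0,t)" using w KV by blast
      have t1: "t \<le> \<tau>1" using gtJT[OF h(3) that(1)] .
      have "phi (s0,t) (s0,\<tau>2) w = phi (s0,\<tau>1) (s0,\<tau>2) (phi (s0,t) (s0,\<tau>1) w)"
        using phi_comp[of "(s0,t)" "(s0,\<tau>1)" "(s0,\<tau>2)" w] t1 that(2) wV by simp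
      also have "\<dots> = 0" using w that(2) unfolding K_def by simp
      finally show "w \<in> K \<tau>2" using wV unfolding K_def by simp
    qed
    define G where "G = {K \<tau> | \<tau>. \<tau> \<notin> JT}"
    have "\<exists>A0\<in>G. \<forall>A\<in>G. A0 \<subseteq> A"
    proof (rule aff_min[of G "(s0,t)"])
      show "G \<noteq> {}" unfolding G_def using y'JT by blast
      show "aff A \<and> A \<subseteq> V (s0,t)" if A: "A \<in> G" for A
      proof -
        obtain \<tau> where "A = K \<tau>" "\<tau> \<notin> JT" using A unfolding G_def by blast
        then show ?thesis using Ksub KV aff_subspace by simp
      qed
      show "\<exists>C\<in>G. C \<subseteq> A \<and> C \<subseteq> B" if AB: "A \<in> G" "B \<in> G" for A B
      proof -
        obtain \<tau>1 where t1: "A = K \<tau>1" "\<tau>1 \<notin> JT" using AB(1) unfolding G_def by blast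
        obtain \<tau>2 where t2: "B = K \<tau>2" "\<tau>2 \<notin> JT" using AB(2) unfolding G_def by blast
        show ?thesis
        proof (cases "\<tau>1 \<le> \<tau>2")
          case True
          have "K \<tau>1 \<subseteq> K \<tau>2" using Kmono[OF t1(2) True] .
          then show ?thesis using t1(1) t2(1) AB(1) by blast
        next
          case False then have "\<tau>2 \<le> \<tau>1" by simp
          have "K \<tau>2 \<subseteq> K \<tau>1" using Kmono[OF t2(2) \<open>\<tau>2 \<le> \<tau>1\<close>] .
          then show ?thesis using t1(1) t2(1) AB(2) by blast
        qed
      qed
    qed
    then obtain A0 where A0: "A0 \<in> G" "\<And>A. A \<in> G \<Longrightarrow> A0 \<subseteq> A" by blast
    then obtain \<tau>0 where t0: "A0 = K \<tau>0" "\<tau>0 \<notin> JT" unfolding G_def by blast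
    have Kmin: "K \<tau>0 \<subseteq> K \<tau>" if "\<tau> \<notin> JT" for \<tau>
    proof -
      have "K \<tau> \<in> G" unfolding G_def using that by blast
      then show ?thesis using A0(2) t0(1) by blast
    qed
    have tt0: "t \<le> \<tau>0" using gtJT[OF h(3) t0(2)] .
    have wV: "w \<in> V (s,t)" using h(5) XV by blast
    have "(s,\<tau>0) \<notin> D" using t0(2) by (simp add: Dmem)
    then have "phi (s,t) (s,\<tau>0) w = 0" using XD[OF h(5)] tt0 by simp
    then have "phi (s0,\<tau>0) (s,\<tau>0) 0 = phi (s,t) (s,\<tau>0) w" using h(4) by simp
    then obtain z where z: "z \<in> V (s0,t)" "phi (s0,t) (s0,\<tau>0) z = 0" "phi (s0,t) (s,t) z = w"
      using me_lift[OF h(4) tt0 V0 wV] by blast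
    have "z \<in> X (s0,t)"
    proof (rule XI[OF z(1)])
      fix q assume q: "(s0,t) \<le> q" "q \<notin> D"
      obtain \<sigma> \<tau> where qq: "q = (\<sigma>,\<tau>)" by (cases q)
      have le: "s0 \<le> \<sigma>" "t \<le> \<tau>" using q(1) unfolding qq by simp_all
      show "phi (s0,t) q z = 0"
      proof (cases "\<tau> \<in> JT")
        case False
        have "z \<in> K \<tau>0" unfolding K_def using z(1,2) by simp
        then have "z \<in> K \<tau>" using Kmin[OF False] by blast
        then have zz: "phi (s0,t) (s0,\<tau>) z = 0" unfolding K_def by simp
        have "phi (s0,t) q z = phi (s0,\<tau>) q (phi (s0,t) (s0,\<tau>) z)"
          using phi_comp[of "(s0,t)" "(s0,\<tau>)" q z] z(1) le unfolding qq by simp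
        then show ?thesis using zz le unfolding qq by simp
      next
        case True
        then have "\<sigma> \<notin> JS" using q(2) unfolding qq Dmem by simp
        then have "s \<le> \<sigma>" using gtJS[OF h(2)] by blast
        then have sq: "(s,t) \<le> q" using le unfolding qq by simp
        have "phi (s0,t) q z = phi (s,t) q (phi (s0,t) (s,t) z)"
          using phi_comp[of "(s0,t)" "(s,t)" q z] z(1) h(4) sq by simp
        also have "\<dots> = phi (s,t) q w" using z(3) by simp
        also have "\<dots> = 0" using XD[OF h(5) sq q(2)] .
        finally show ?thesis .
      qed
    qed
    then show ?thesis using z(3) by blast
  qed
  have vert: "\<exists>z\<in>X (s,t0). phi (s,t0) (s,t) z = w"
    if h: "s \<in> JS" "t0 \<in> JT" "t \<in> JT" "t0 \<le> t" "w \<in> X (s,t)" for s t0 t w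
  proof -
    define K where "K = (\<lambda>\<sigma>. {w \<in> V (s,t0). \<forall>q\<in>{(\<sigma>,t0)}. phi (s,t0) q w = 0})"
    have Ksub: "vs.subspace (K \<sigma>)" if "\<sigma> \<notin> JS" for \<sigma>
      unfolding K_def by (rule ker_sub) (use gtJS[OF h(1) that] in simp)
    have KV: "K \<sigma> \<subseteq> V (s,t0)" for \<sigma> unfolding K_def by blast
    have Kmono: "K \<sigma>1 \<subseteq> K \<sigma>2" if "\<sigma>1 \<notin> JS" "\<sigma>1 \<le> \<sigma>2" for \<sigma>1 \<sigma>2
    proof
      fix w assume w: "w \<in> K \<sigma>1"
      have wV: "w \<in> V (s,t0)" using w KV by blast
      have s1: "s \<le> \<sigma>1" using gtJS[OF h(1) that(1)] .
      have "phi (s,t0) (\<sigma>2,t0) w = phi (\<sigma>1,t0) (\<sigma>2,t0) (phi (s,t0) (\<sigma>1,t0) w)"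
        using phi_comp[of "(s,t0)" "(\<sigma>1,t0)" "(\<sigma>2,t0)" w] s1 that(2) wV by simp
      also have "\<dots> = 0" using w that(2) unfolding K_def by simp
      finally show "w \<in> K \<sigma>2" using wV unfolding K_def by simp
    qed
    define G where "G = {K \<sigma> | \<sigma>. \<sigma> \<notin> JS}"
    have "\<exists>A0\<in>G. \<forall>A\<in>G. A0 \<subseteq> A"
    proof (rule aff_min[of G "(s,t0)"])
      show "G \<noteq> {}" unfolding G_def using x'JS by blast
      show "aff A \<and> A \<subseteq> V (s,t0)" if A: "A \<in> G" for A
      proof -
        obtain \<sigma> where "A = K \<sigma>" "\<sigma> \<notin> JS" using A unfolding G_def by blast
        then show ?thesis using Ksub KV aff_subspace by simp
      qed
      show "\<exists>C\<in>G. C \<subseteq> A \<and> C \<subseteq> B" if AB: "A \<in> G" "B \<in> G" for A B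
      proof -
        obtain \<sigma>1 where t1: "A = K \<sigma>1" "\<sigma>1 \<notin> JS" using AB(1) unfolding G_def by blast
        obtain \<sigma>2 where t2: "B = K \<sigma>2" "\<sigma>2 \<notin> JS" using AB(2) unfolding G_def by blast
        show ?thesis
        proof (cases "\<sigma>1 \<le> \<sigma>2")
          case True
          have "K \<sigma>1 \<subseteq> K \<sigma>2" using Kmono[OF t1(2) True] .
          then show ?thesis using t1(1) t2(1) AB(1) by blast
        next
          case False then have "\<sigma>2 \<le> \<sigma>1" by simp
          have "K \<sigma>2 \<subseteq> K \<sigma>1" using Kmono[OF t2(2) \<open>\<sigma>2 \<le> \<sigma>1\<close>] .
          then show ?thesis using t1(1) t2(1) AB(2) by blast
        qed
      qed
    qed
    then obtain A0 where A0: "A0 \<in> G" "\<And>A. A \<in> G \<Longrightarrow> A0 \<subseteq> A" by blast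
    then obtain \<sigma>0 where s0: "A0 = K \<sigma>0" "\<sigma>0 \<notin> JS" unfolding G_def by blast
    have Kmin: "K \<sigma>0 \<subseteq> K \<sigma>" if "\<sigma> \<notin> JS" for \<sigma>
    proof -
      have "K \<sigma> \<in> G" unfolding G_def using that by blast
      then show ?thesis using A0(2) s0(1) by blast
    qed
    have ss0: "s \<le> \<sigma>0" using gtJS[OF h(1) s0(2)] .
    have wV: "w \<in> V (s,t)" using h(5) XV by blast
    have "(\<sigma>0,t) \<notin> D" using s0(2) by (simp add: Dmem)
    then have "phi (s,t) (\<sigma>0,t) w = 0" using XD[OF h(5)] ss0 by simp
    then have "phi (s,t) (\<sigma>0,t) w = phi (\<sigma>0,t0) (\<sigma>0,t) 0" using h(4) by simp
    then obtain z where z: "z \<in> V (s,t0)" "phi (s,t0) (s,t) z = w" "phi (s,t0) (\<sigma>0,t0) z = 0"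
      using me_lift[OF ss0 h(4) wV V0] by blast
    have "z \<in> X (s,t0)"
    proof (rule XI[OF z(1)])
      fix q assume q: "(s,t0) \<le> q" "q \<notin> D"
      obtain \<sigma> \<tau> where qq: "q = (\<sigma>,\<tau>)" by (cases q)
      have le: "s \<le> \<sigma>" "t0 \<le> \<tau>" using q(1) unfolding qq by simp_all
      show "phi (s,t0) q z = 0"
      proof (cases "\<sigma> \<in> JS")
        case False
        have "z \<in> K \<sigma>0" unfolding K_def using z(1,3) by simp
        then have "z \<in> K \<sigma>" using Kmin[OF False] by blast
        then have zz: "phi (s,t0) (\<sigma>,t0) z = 0" unfolding K_def by simp
        have "phi (s,t0) q z = phi (\<sigma>,t0) q (phi (s,t0) (\<sigma>,t0) z)"
          using phi_comp[of "(s,t0)" "(\<sigma>,t0)" q z] z(1) le unfolding qq by simp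
        then show ?thesis using zz le unfolding qq by simp
      next
        case True
        then have "\<tau> \<notin> JT" using q(2) unfolding qq Dmem by simp
        then have "t \<le> \<tau>" using gtJT[OF h(3)] by blast
        then have sq: "(s,t) \<le> q" using le unfolding qq by simp
        have "phi (s,t0) q z = phi (s,t) q (phi (s,t0) (s,t) z)"
          using phi_comp[of "(s,t0)" "(s,t)" q z] z(1) h(4) sq by simp
        also have "\<dots> = phi (s,t) q w" using z(2) by simp
        also have "\<dots> = 0" using XD[OF h(5) sq q(2)] .
        finally show ?thesis .
      qed
    qed
    then show ?thesis using z(2) by blast
  qed
  have surj: "\<exists>z\<in>X p. phi p q z = w" if h: "p \<in> D" "q \<in> D" "p \<le> q" "w \<in> X q" for p q w
  proof -
    obtain s t where qq: "q = (s,t)" by (cases q)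
    obtain s0 t0 where pp: "p = (s0,t0)" by (cases p)
    have m: "s0 \<in> JS" "t0 \<in> JT" "s \<in> JS" "t \<in> JT" "s0 \<le> s" "t0 \<le> t"
      using h(1,2,3) unfolding pp qq Dmem by simp_all
    obtain z1 where z1: "z1 \<in> X (s0,t)" "phi (s0,t) (s,t) z1 = w"
      using hor[OF m(1) m(3) m(4) m(5)] h(4) unfolding qq by blast
    obtain z where z: "z \<in> X (s0,t0)" "phi (s0,t0) (s0,t) z = z1"
      using vert[OF m(1) m(2) m(4) m(6) z1(1)] by blast
    have zV: "z \<in> V (s0,t0)" using z(1) XV by blast
    have "phi (s0,t0) (s,t) z = phi (s0,t) (s,t) (phi (s0,t0) (s0,t) z)"
      using phi_comp[of "(s0,t0)" "(s0,t)" "(s,t)" z] zV m(5,6) by simp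
    then have "phi (s0,t0) (s,t) z = w" using z(2) z1(2) by simp
    then show ?thesis using z(1) unfolding pp qq by blast
  qed
  define A0 where "A0 = (\<lambda>p. {w \<in> X p. phi p (jn p) w = phi a (jn p) u})"
  have Dd: "\<exists>r\<in>D. r \<le> p \<and> r \<le> q" if "p \<in> D" "q \<in> D" for p q
  proof -
    obtain s t where qq: "q = (s,t)" by (cases q)
    obtain s0 t0 where pp: "p = (s0,t0)" by (cases p)
    have "s0 \<in> JS" "t0 \<in> JT" using that(1) unfolding pp Dmem by simp_all
    then have "min s0 s \<in> JS" "min t0 t \<in> JT" using JSdown[of s0 "min s0 s"] JTdown[of t0 "min t0 t"] by simp_all
    then have "(min s0 s, min t0 t) \<in> D" unfolding Dmem by simp
    moreover have "(min s0 s, min t0 t) \<le> p" "(min s0 s, min t0 t) \<le> q" unfolding pp qq by simp_all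
    ultimately show ?thesis by blast
  qed
  have A0aff: "aff (A0 p) \<and> A0 p \<subseteq> V p" if p: "p \<in> D" for p
  proof
    have "phi a (jn p) u \<in> X (jn p)" using Xmap[OF jn_ge(2) uX] .
    then obtain w0 where w0: "w0 \<in> X p" "phi p (jn p) w0 = phi a (jn p) u"
      using surj[OF p jnD[OF p] jn_ge(1)] by blast
    have "aff (X p \<inter> {w. phi p (jn p) w = phi p (jn p) w0})"
      using aff_fiber[OF aff_subspace[OF Xsub] XV jn_ge(1) w0(1)] .
    moreover have "X p \<inter> {w. phi p (jn p) w = phi p (jn p) w0} = A0 p"
      unfolding A0_def using w0(2) by auto
    ultimately show "aff (A0 p)" by simp
    show "A0 p \<subseteq> V p" unfolding A0_def using XV by blast
  qed
  have A0c: "phi p q ` A0 p \<subseteq> A0 q" if "p \<in> D" "q \<in> D" "p \<le> q" for p q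
  proof
    fix x assume "x \<in> phi p q ` A0 p"
    then obtain w where w: "w \<in> A0 p" "x = phi p q w" by blast
    have wX: "w \<in> X p" and we: "phi p (jn p) w = phi a (jn p) u" using w(1) unfolding A0_def by simp_all
    have wV: "w \<in> V p" using wX XV by blast
    have "x \<in> X q" using Xmap[OF that(3) wX] w(2) by simp
    moreover have "phi q (jn q) x = phi a (jn q) u"
    proof -
      have "phi q (jn q) x = phi p (jn q) w" using phi_comp[OF that(3) jn_ge(1) wV] w(2) by simp
      also have "\<dots> = phi (jn p) (jn q) (phi p (jn p) w)"
        using phi_comp[OF jn_ge(1) jn_mono[OF that(3)] wV] by simp
      also have "\<dots> = phi (jn p) (jn q) (phi a (jn p) u)" using we by simp
      also have "\<dots> = phi a (jn q) u" using phi_comp[OF jn_ge(2) jn_mono[OF that(3)] uaV] .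
      finally show ?thesis .
    qed
    ultimately show "x \<in> A0 q" unfolding A0_def by simp
  qed
  have ex: "\<exists>f. (\<forall>p\<in>D. f p \<in> A0 p) \<and> (\<forall>p\<in>D. \<forall>q\<in>D. p \<le> q \<longrightarrow> phi p q (f p) = f q)"
    by (rule invlim_ex[of D A0, OF Dd A0aff A0c])
  then obtain f0 where f0c: "(\<forall>p\<in>D. f0 p \<in> A0 p) \<and> (\<forall>p\<in>D. \<forall>q\<in>D. p \<le> q \<longrightarrow> phi p q (f0 p) = f0 q)" ..
  note f0 = f0c[THEN conjunct1] f0c[THEN conjunct2]
  define f where "f = (\<lambda>p. if p \<in> D then f0 p else 0)"
  have f0X: "f0 p \<in> X p" if "p \<in> D" for p using f0(1) that unfolding A0_def by blast
  have fV: "\<forall>p. f p \<in> V p"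
  proof
    fix p show "f p \<in> V p"
    proof (cases "p \<in> D")
      case True then show ?thesis using subsetD[OF XV f0X[OF True]] unfolding f_def by simp
    qed (simp add: f_def)
  qed
  have fc: "\<forall>p q. p \<le> q \<longrightarrow> phi p q (f p) = f q"
  proof (intro allI impI)
    fix p q assume pq: "(p::'s\<times>'t) \<le> q"
    show "phi p q (f p) = f q"
    proof (cases "p \<in> D")
      case True
      show ?thesis
      proof (cases "q \<in> D")
        case True2: True
        then show ?thesis using f0(2) True pq unfolding f_def by simp
      next
        case False
        then show ?thesis using XD[OF f0X[OF True] pq False] True unfolding f_def by simp
      qed
    next
      case False
      then have "q \<notin> D" using Ddown pq by blast
      then show ?thesis using False pq unfolding f_def by simp
    qed
  qed
  have fnz: "(p \<in> D) = (f p \<noteq> 0)" for p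
  proof
    assume p: "p \<in> D"
    have "phi p (jn p) (f0 p) = phi a (jn p) u" using f0(1) p unfolding A0_def by blast
    then have "phi p (jn p) (f0 p) \<noteq> 0" using ujn[OF p] by simp
    then have "f0 p \<noteq> 0" using phi0[OF jn_ge(1)[of p]] by auto
    then show "f p \<noteq> 0" using p unfolding f_def by simp
  next
    assume "f p \<noteq> 0" then show "p \<in> D" unfolding f_def by (cases "p \<in> D") simp_all
  qed
  have "JS \<noteq> {}" using xJS by blast
  moreover have "JT \<noteq> {}" using yJT by blast
  moreover have "down_closed JS" unfolding down_closed_def using JSdown by blast
  moreover have "down_closed JT" unfolding down_closed_def using JTdown by blast
  ultimately show ?thesis using fV fc fnz unfolding D_def by blast
qed

end


context mx begin

lemma submoduleI:
  assumes "\<And>p. vs.subspace (N p)" "\<And>p. N p \<subseteq> V p" "\<And>p q v. p \<le> q \<Longrightarrow> v \<in> N p \<Longrightarrow> phi p q v \<in> N q"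
  shows "submodule scale V phi N"
  unfolding submodule_def using assms by blast

lemma submoduleD:
  assumes "submodule scale V phi N"
  shows "vs.subspace (N p)" "N p \<subseteq> V p" "p \<le> q \<Longrightarrow> v \<in> N p \<Longrightarrow> phi p q v \<in> N q"
proof -
  have A: "(\<forall>p. vs.subspace (N p) \<and> N p \<subseteq> V p) \<and> (\<forall>p q. p \<le> q \<longrightarrow> (\<forall>v\<in>N p. phi p q v \<in> N q))"
    using assms unfolding submodule_def .
  show "vs.subspace (N p)" using A by blast
  show "N p \<subseteq> V p" using A by blast
  show "p \<le> q \<Longrightarrow> v \<in> N p \<Longrightarrow> phi p q v \<in> N q" using A by blast
qed

lemma L3:
  assumes ind: "indecomposable scale V phi"
    and JS: "JS \<noteq> {}" and JT: "JT \<noteq> {}" and dJS: "down_closed JS" and dJT: "down_closed JT"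
    and fV: "\<forall>p. f p \<in> V p" and fc: "\<forall>p q. p \<le> q \<longrightarrow> phi p q (f p) = f q"
    and fnz: "\<forall>p. (p \<in> JS \<times> JT) = (f p \<noteq> 0)"
  shows "pmod_iso scale V phi ((*) :: 'k \<Rightarrow> 'k \<Rightarrow> 'k) (kB_space (JS \<times> JT)) (kB_map (JS \<times> JT))"
proof -
  define D where "D = JS \<times> JT"
  have fD: "(p \<in> D) = (f p \<noteq> 0)" for p using fnz unfolding D_def by blast
  have fcc: "phi p q (f p) = f q" if "p \<le> q" for p q using fc that by blast
  have fVV: "f p \<in> V p" for p using fV by blast
  define jn where "jn = (\<lambda>p q::'s\<times>'t. (max (fst p) (fst q), max (snd p) (snd q)))"
  have jn_ge: "p \<le> jn p q" "q \<le> jn p q" for p q unfolding jn_def by (cases p, cases q, simp)+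
  have jnD: "jn p q \<in> D" if "p \<in> D" "q \<in> D" for p q
  proof -
    obtain s t where p: "p = (s,t)" by (cases p)
    obtain s' t' where q: "q = (s',t')" by (cases q)
    have "s \<in> JS" "t \<in> JT" "s' \<in> JS" "t' \<in> JT" using that unfolding p q D_def by simp_all
    then have "max s s' \<in> JS" "max t t' \<in> JT" by (simp_all add: max_def)
    then show ?thesis unfolding jn_def p q D_def by simp
  qed
  have Ddown: "p \<in> D" if "p \<le> q" "q \<in> D" for p q
  proof -
    obtain s t where p: "p = (s,t)" by (cases p)
    obtain s' t' where q: "q = (s',t')" by (cases q)
    have "s' \<in> JS" "t' \<in> JT" "s \<le> s'" "t \<le> t'" using that unfolding p q D_def by simp_all
    then have "s \<in> JS" "t \<in> JT" using dJS dJT unfolding down_closed_def by blast+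
    then show ?thesis unfolding p D_def by simp
  qed
  define L where "L = (\<lambda>p. range (\<lambda>c. scale c (f p)))"
  have L0: "0 \<in> L p" for p unfolding L_def by (rule range_eqI[of _ _ 0]) simp
  have Lsub: "submodule scale V phi L"
  proof (rule submoduleI)
    fix p show "vs.subspace (L p)"
      unfolding vs.subspace_def
    proof (intro conjI ballI allI)
      show "0 \<in> L p" by (rule L0)
      fix x y assume "x \<in> L p" "y \<in> L p"
      then obtain c d where "x = scale c (f p)" "y = scale d (f p)" unfolding L_def by blast
      then have "x + y = scale (c + d) (f p)" by (simp add: vs.scale_left_distrib)
      then show "x + y \<in> L p" unfolding L_def by blast
    next
      fix c x assume "x \<in> L p"
      then obtain d where "x = scale d (f p)" unfolding L_def by blast
      then have "scale c x = scale (c * d) (f p)" by simp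
      then show "scale c x \<in> L p" unfolding L_def by blast
    qed
    show "L p \<subseteq> V p" unfolding L_def using Vscale fVV by blast
  next
    fix p q v assume pq: "p \<le> q" and v: "v \<in> L p"
    then obtain c where c: "v = scale c (f p)" unfolding L_def by blast
    have "phi p q v = scale c (f q)" using phi_scale[OF pq fVV] fcc[OF pq] c by simp
    then show "phi p q v \<in> L q" unfolding L_def by blast
  qed
  define Nset where "Nset = {N. submodule scale V phi N \<and> (\<forall>p. N p \<inter> L p = {0})}"
  define P where "P = (\<lambda>A B. \<forall>p::'s\<times>'t. A p \<subseteq> (B p :: 'v set))"
  have NsetI: "N \<in> Nset" if "submodule scale V phi N" "\<And>p. N p \<inter> L p = {0}" for N
    unfolding Nset_def using that by blast
  have NsetD: "submodule scale V phi N" "N p \<inter> L p = {0}" if "N \<in> Nset" for N p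
    using that unfolding Nset_def by blast+
  have Z: "(\<lambda>p. {0}) \<in> Nset"
  proof (rule NsetI)
    show "submodule scale V phi (\<lambda>p. {0})"
      by (rule submoduleI) auto
    show "{0} \<inter> L p = {0}" for p using L0 by blast
  qed
  have "\<exists>m\<in>Nset. \<forall>a\<in>Nset. P m a \<longrightarrow> a = m"
  proof (rule zorn_pred)
    show "\<And>a. a \<in> Nset \<Longrightarrow> P a a" unfolding P_def by blast
    show "\<And>a b c. P a b \<Longrightarrow> P b c \<Longrightarrow> P a c" unfolding P_def by blast
    show "\<And>a b. P a b \<Longrightarrow> P b a \<Longrightarrow> a = b" unfolding P_def by (rule ext, blast)
  next
    fix C assume CN: "C \<subseteq> Nset" and ch: "\<forall>a\<in>C. \<forall>b\<in>C. P a b \<or> P b a"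
    show "\<exists>u\<in>Nset. \<forall>a\<in>C. P a u"
    proof (cases "C = {}")
      case True then show ?thesis using Z by blast
    next
      case False
      then obtain N1 where N1: "N1 \<in> C" by blast
      define U where "U = (\<lambda>p. \<Union>N\<in>C. N p)"
      have CS: "submodule scale V phi N" if "N \<in> C" for N using NsetD(1) CN that by blast
      have "U \<in> Nset"
      proof (rule NsetI)
        show "submodule scale V phi U"
        proof (rule submoduleI)
          fix p show "vs.subspace (U p)"
            unfolding vs.subspace_def
          proof (intro conjI ballI allI)
            show "0 \<in> U p" unfolding U_def using vs.subspace_0[OF submoduleD(1)[OF CS[OF N1]]] N1 by blast
            fix x y assume "x \<in> U p" "y \<in> U p"
            then obtain A B where AB: "A \<in> C" "x \<in> A p" "B \<in> C" "y \<in> B p" unfolding U_def by blast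
            have "P A B \<or> P B A" using ch AB by blast
            then show "x + y \<in> U p"
            proof
              assume "P A B"
              then have "x \<in> B p" using AB unfolding P_def by blast
              then have "x + y \<in> B p" using vs.subspace_add[OF submoduleD(1)[OF CS[OF AB(3)]]] AB(4) by blast
              then show ?thesis unfolding U_def using AB(3) by blast
            next
              assume "P B A"
              then have "y \<in> A p" using AB unfolding P_def by blast
              then have "x + y \<in> A p" using vs.subspace_add[OF submoduleD(1)[OF CS[OF AB(1)]]] AB(2) by blast
              then show ?thesis unfolding U_def using AB(1) by blast
            qed
          next
            fix c x assume "x \<in> U p"
            then obtain A where A: "A \<in> C" "x \<in> A p" unfolding U_def by blast
            then have "scale c x \<in> A p" using vs.subspace_scale[OF submoduleD(1)[OF CS[OF A(1)]]] by blast
            then show "scale c x \<in> U p" unfolding U_def using A(1) by blast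
          qed
          show "U p \<subseteq> V p" unfolding U_def using submoduleD(2)[OF CS] by blast
        next
          fix p q v assume pq: "p \<le> q" and v: "v \<in> U p"
          then obtain A where A: "A \<in> C" "v \<in> A p" unfolding U_def by blast
          then have "phi p q v \<in> A q" using submoduleD(3)[OF CS[OF A(1)] pq] by blast
          then show "phi p q v \<in> U q" unfolding U_def using A(1) by blast
        qed
        fix p show "U p \<inter> L p = {0}"
        proof
          show "U p \<inter> L p \<subseteq> {0}"
          proof
            fix x assume x: "x \<in> U p \<inter> L p"
            then obtain A where A: "A \<in> C" "x \<in> A p" unfolding U_def by blast
            have "A p \<inter> L p = {0}" using NsetD(2) CN A(1) by blast
            then show "x \<in> {0}" using A(2) x by blast
          qed
          show "{0} \<subseteq> U p \<inter> L p"
            using L0 vs.subspace_0[OF submoduleD(1)[OF CS[OF N1]]] N1 unfolding U_def by blast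
        qed
      qed
      moreover have "\<forall>a\<in>C. P a u" if "u = U" for u unfolding P_def U_def that by blast
      ultimately show ?thesis by blast
    qed
  qed
  then obtain N2 where N2: "N2 \<in> Nset" and N2max: "\<And>A. A \<in> Nset \<Longrightarrow> (\<forall>p. N2 p \<subseteq> A p) \<Longrightarrow> A = N2"
    unfolding P_def by blast
  have N2s: "submodule scale V phi N2" using NsetD(1)[OF N2] .
  have N2sub: "vs.subspace (N2 p)" for p using submoduleD(1)[OF N2s] .
  have N2V: "N2 p \<subseteq> V p" for p using submoduleD(2)[OF N2s] .
  have N2c: "phi p q v \<in> N2 q" if "p \<le> q" "v \<in> N2 p" for p q v using submoduleD(3)[OF N2s that] .
  have N2L: "N2 p \<inter> L p = {0}" for p using NsetD(2)[OF N2] .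
  have N2L': "scale c (f p) = 0" if "scale c (f p) \<in> N2 p" for c p
    using N2L[of p] that unfolding L_def by blast
  have spanning: "\<exists>c. w - scale c (f p) \<in> N2 p" if wV: "w \<in> V p" for p w
  proof (rule ccontr)
    assume H: "\<not> (\<exists>c. w - scale c (f p) \<in> N2 p)"
    have "\<exists>w'. w' \<in> V p \<and> (\<forall>c. w' - scale c (f p) \<notin> N2 p) \<and>
            (\<forall>q c. p \<le> q \<longrightarrow> phi p q w' - scale c (f q) \<in> N2 q \<longrightarrow> scale c (f q) = 0)"
    proof (cases "\<exists>q0 c0. p \<le> q0 \<and> f q0 \<noteq> 0 \<and> phi p q0 w - scale c0 (f q0) \<in> N2 q0")
      case True
      then obtain q0 c0 where q0: "p \<le> q0" "f q0 \<noteq> 0" "phi p q0 w - scale c0 (f q0) \<in> N2 q0" by blast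
      define w' where "w' = w - scale c0 (f p)"
      have w'V: "w' \<in> V p" unfolding w'_def using Vdiff[OF wV Vscale[OF fVV]] .
      have phiw': "phi p q w' = phi p q w - scale c0 (f q)" if "p \<le> q" for q
        unfolding w'_def using phi_diff[OF that wV Vscale[OF fVV]] phi_scale[OF that fVV] fcc[OF that] by simp
      have "\<forall>c. w' - scale c (f p) \<notin> N2 p"
      proof
        fix c
        have "w' - scale c (f p) = w - scale (c0 + c) (f p)" unfolding w'_def
          by (simp add: vs.scale_left_distrib algebra_simps)
        then show "w' - scale c (f p) \<notin> N2 p" using H by metis
      qed
      moreover have "\<forall>q c. p \<le> q \<longrightarrow> phi p q w' - scale c (f q) \<in> N2 q \<longrightarrow> scale c (f q) = 0"
      proof (intro allI impI)
        fix q c assume pq: "p \<le> q" and n: "phi p q w' - scale c (f q) \<in> N2 q"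
        show "scale c (f q) = 0"
        proof (rule ccontr)
          assume nz: "scale c (f q) \<noteq> 0"
          then have fq: "f q \<noteq> 0" by auto
          have qD: "q \<in> D" "q0 \<in> D" using fD fq q0(2) by blast+
          define r where "r = jn q q0"
          have rD: "r \<in> D" unfolding r_def using jnD[OF qD] .
          have qr: "q \<le> r" and q0r: "q0 \<le> r" unfolding r_def using jn_ge by blast+
          have pr: "p \<le> r" using pq qr by (rule order_trans)
          have fr: "f r \<noteq> 0" using fD rD by blast
          have w'pq: "phi p q w' \<in> V q" using phiV[OF pq w'V] .
          have A1: "phi q r (phi p q w' - scale c (f q)) \<in> N2 r" using N2c[OF qr n] .
          have "phi q r (phi p q w' - scale c (f q)) = phi p r w' - scale c (f r)"
            using phi_diff[OF qr w'pq Vscale[OF fVV]] phi_scale[OF qr fVV] fcc[OF qr] phi_comp[OF pq qr w'V] by simp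
          then have A1': "phi p r w' - scale c (f r) \<in> N2 r" using A1 by simp
          have "phi p q0 w' \<in> N2 q0" using phiw'[OF q0(1)] q0(3) by simp
          then have "phi q0 r (phi p q0 w') \<in> N2 r" using N2c[OF q0r] by blast
          then have A2: "phi p r w' \<in> N2 r" using phi_comp[OF q0(1) q0r w'V] by simp
          have "phi p r w' - (phi p r w' - scale c (f r)) \<in> N2 r"
            using vs.subspace_diff[OF N2sub A2 A1'] .
          then have "scale c (f r) \<in> N2 r" by simp
          then have "scale c (f r) = 0" using N2L' by blast
          then have "c = 0" using fr by simp
          then show False using nz by simp
        qed
      qed
      ultimately show ?thesis using w'V by blast
    next
      case False
      have "\<forall>q c. p \<le> q \<longrightarrow> phi p q w - scale c (f q) \<in> N2 q \<longrightarrow> scale c (f q) = 0"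
      proof (intro allI impI)
        fix q c assume pq: "p \<le> q" and n: "phi p q w - scale c (f q) \<in> N2 q"
        show "scale c (f q) = 0"
        proof (rule ccontr)
          assume nz: "scale c (f q) \<noteq> 0"
          then have "f q \<noteq> 0" by auto
          then show False using False pq n by blast
        qed
      qed
      then show ?thesis using wV H by blast
    qed
    then obtain w' where w': "w' \<in> V p" "\<And>c. w' - scale c (f p) \<notin> N2 p"
        "\<And>q c. p \<le> q \<Longrightarrow> phi p q w' - scale c (f q) \<in> N2 q \<Longrightarrow> scale c (f q) = 0" by blast
    define N' where "N' = (\<lambda>q. if p \<le> q then {n + scale d (phi p q w') | n d. n \<in> N2 q} else N2 q)"
    have N2N': "N2 q \<subseteq> N' q" for q
    proof
      fix n assume "n \<in> N2 q"
      then have "n + scale 0 (phi p q w') \<in> {n + scale d (phi p q w') | n d. n \<in> N2 q}" by blast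
      then show "n \<in> N' q" using \<open>n \<in> N2 q\<close> unfolding N'_def by auto
    qed
    have N'sub: "submodule scale V phi N'"
    proof (rule submoduleI)
      fix q show "vs.subspace (N' q)"
      proof (cases "p \<le> q")
        case False then show ?thesis unfolding N'_def using N2sub by simp
      next
        case True
        show ?thesis
          unfolding vs.subspace_def N'_def if_P[OF True]
        proof (intro conjI ballI allI)
          show "0 \<in> {n + scale d (phi p q w') | n d. n \<in> N2 q}"
            using vs.subspace_0[OF N2sub] by (intro CollectI exI[of _ 0]) simp
          fix x y assume "x \<in> {n + scale d (phi p q w') | n d. n \<in> N2 q}" "y \<in> {n + scale d (phi p q w') | n d. n \<in> N2 q}"
          then obtain n1 d1 n2 d2 where xy: "x = n1 + scale d1 (phi p q w')" "n1 \<in> N2 q" "y = n2 + scale d2 (phi p q w')" "n2 \<in> N2 q"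
            by blast
          have "x + y = (n1 + n2) + scale (d1 + d2) (phi p q w')" using xy by (simp add: vs.scale_left_distrib algebra_simps)
          moreover have "n1 + n2 \<in> N2 q" using vs.subspace_add[OF N2sub xy(2) xy(4)] .
          ultimately show "x + y \<in> {n + scale d (phi p q w') | n d. n \<in> N2 q}" by blast
        next
          fix c x assume "x \<in> {n + scale d (phi p q w') | n d. n \<in> N2 q}"
          then obtain n d where x: "x = n + scale d (phi p q w')" "n \<in> N2 q" by blast
          have "scale c x = scale c n + scale (c * d) (phi p q w')" using x by (simp add: vs.scale_right_distrib)
          moreover have "scale c n \<in> N2 q" using vs.subspace_scale[OF N2sub x(2)] .
          ultimately show "scale c x \<in> {n + scale d (phi p q w') | n d. n \<in> N2 q}" by blast
        qed
      qed
      show "N' q \<subseteq> V q"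
      proof (cases "p \<le> q")
        case False then show ?thesis unfolding N'_def using N2V by simp
      next
        case True
        have "phi p q w' \<in> V q" using phiV[OF True w'(1)] .
        show ?thesis unfolding N'_def if_P[OF True]
        proof
          fix x assume "x \<in> {n + scale d (phi p q w') | n d. n \<in> N2 q}"
          then obtain n d where nd: "x = n + scale d (phi p q w')" "n \<in> N2 q" by blast
          have "n \<in> V q" using nd(2) N2V by blast
          then show "x \<in> V q" using nd(1) Vadd Vscale[OF \<open>phi p q w' \<in> V q\<close>] by simp
        qed
      qed
    next
      fix q q' v assume qq: "q \<le> q'" and v: "v \<in> N' q"
      show "phi q q' v \<in> N' q'"
      proof (cases "p \<le> q")
        case False
        then have "v \<in> N2 q" using v unfolding N'_def by simp
        then show ?thesis using N2c[OF qq] N2N' by blast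
      next
        case True
        then obtain n d where nd: "v = n + scale d (phi p q w')" "n \<in> N2 q" using v unfolding N'_def by auto
        have pq': "p \<le> q'" using True qq by (rule order_trans)
        have nV: "n \<in> V q" using nd(2) N2V by blast
        have wq: "phi p q w' \<in> V q" using phiV[OF True w'(1)] .
        have "phi q q' v = phi q q' n + scale d (phi p q' w')"
          using phi_add[OF qq nV Vscale[OF wq]] phi_scale[OF qq wq] phi_comp[OF True qq w'(1)] nd(1) by simp
        moreover have "phi q q' n \<in> N2 q'" using N2c[OF qq nd(2)] .
        ultimately have "phi q q' v \<in> {n + scale d (phi p q' w') | n d. n \<in> N2 q'}" by blast
        then show ?thesis unfolding N'_def using pq' by simp
      qed
    qed
    have "N' \<in> Nset"
    proof (rule NsetI[OF N'sub])
      fix q show "N' q \<inter> L q = {0}"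
      proof
        show "{0} \<subseteq> N' q \<inter> L q" using N2N' L0 vs.subspace_0[OF N2sub] by blast
        show "N' q \<inter> L q \<subseteq> {0}"
        proof
          fix x assume x: "x \<in> N' q \<inter> L q"
          then obtain e where e: "x = scale e (f q)" unfolding L_def by blast
          show "x \<in> {0}"
          proof (cases "p \<le> q")
            case False
            then have "x \<in> N2 q" using x unfolding N'_def by simp
            then show ?thesis using x N2L by blast
          next
            case True
            then obtain n d where nd: "x = n + scale d (phi p q w')" "n \<in> N2 q" using x unfolding N'_def by auto
            show ?thesis
            proof (cases "d = 0")
              case True
              then have "x \<in> N2 q" using nd by simp
              then show ?thesis using x N2L by blast
            next
              case False
              have "scale (inverse d) (- n) = phi p q w' - scale (e / d) (f q)"
              proof -
                have "scale d (phi p q w') = x - n" using nd(1) by simp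
                then have "scale (inverse d) (scale d (phi p q w')) = scale (inverse d) (x - n)" by simp
                then have "phi p q w' = scale (inverse d) x - scale (inverse d) n"
                  using False by (simp add: vs.scale_right_diff_distrib)
                then show ?thesis using e by (simp add: divide_inverse mult.commute)
              qed
              moreover have "scale (inverse d) (- n) \<in> N2 q"
                using vs.subspace_scale[OF N2sub vs.subspace_neg[OF N2sub nd(2)]] .
              ultimately have "phi p q w' - scale (e / d) (f q) \<in> N2 q" by simp
              then have "scale (e / d) (f q) = 0" using w'(3)[OF True] by blast
              then have "e = 0 \<or> f q = 0" using False by simp
              then show ?thesis using e by auto
            qed
          qed
        qed
      qed
    qed
    then have "N' = N2" using N2max N2N' by blast
    moreover have "w' \<in> N' p"
    proof -
      have "w' = 0 + scale 1 (phi p p w')" using phi_id[OF w'(1)] by simp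
      then have "w' \<in> {n + scale d (phi p p w') | n d. n \<in> N2 p}" using vs.subspace_0[OF N2sub] by blast
      then show ?thesis unfolding N'_def by simp
    qed
    ultimately have "w' - scale 0 (f p) \<in> N2 p" by simp
    then show False using w'(2) by blast
  qed
  have dec: "(\<forall>p. L p = {0}) \<or> (\<forall>p. N2 p = {0})"
  proof -
    have "\<forall>p. L p \<inter> N2 p = {0} \<and> (\<forall>v\<in>V p. \<exists>u\<in>L p. \<exists>w\<in>N2 p. v = u + w)"
    proof (intro allI conjI ballI)
      fix p show "L p \<inter> N2 p = {0}" using N2L by blast
      fix v assume "v \<in> V p"
      then obtain c where c: "v - scale c (f p) \<in> N2 p" using spanning by blast
      have "scale c (f p) \<in> L p" unfolding L_def by blast
      moreover have "v = scale c (f p) + (v - scale c (f p))" by simp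
      ultimately show "\<exists>u\<in>L p. \<exists>w\<in>N2 p. v = u + w" using c by blast
    qed
    then show ?thesis using ind Lsub N2s unfolding indecomposable_def by blast
  qed
  obtain s0 t0 where st0: "s0 \<in> JS" "t0 \<in> JT" using JS JT by blast
  have "(s0,t0) \<in> D" unfolding D_def using st0 by simp
  then have "f (s0,t0) \<noteq> 0" using fD by blast
  moreover have "f (s0,t0) \<in> L (s0,t0)" unfolding L_def by (rule range_eqI[of _ _ 1]) simp
  ultimately have "L (s0,t0) \<noteq> {0}" by blast
  then have N20: "N2 p = {0}" for p using dec by blast
  have Vrep: "\<exists>c. w = scale c (f p)" if wV: "w \<in> V p" for p w
  proof -
    obtain c where "w - scale c (f p) \<in> N2 p" using spanning[OF wV] by blast
    then have "w - scale c (f p) = 0" using N20 by blast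
    then show ?thesis by (intro exI[of _ c]) simp
  qed
  have VoutD: "V p = {0}" if "p \<notin> D" for p
  proof -
    have "f p = 0" using fD that by blast
    then have "w = 0" if "w \<in> V p" for w using Vrep[OF that] by auto
    then show ?thesis using V0 by blast
  qed
  define g where "g = (\<lambda>p w. if p \<in> D then (THE c. w = scale c (f p)) else (0::'k))"
  have g_sc: "g p (scale c (f p)) = c" if "p \<in> D" for p c
  proof -
    have fp: "f p \<noteq> 0" using fD that by blast
    have "(THE c'. scale c (f p) = scale c' (f p)) = c"
      by (rule the_equality) (use fp in auto)
    then show ?thesis unfolding g_def using that by simp
  qed
  have g_out: "g p w = 0" if "p \<notin> D" for p w unfolding g_def using that by simp
  have g0: "g p 0 = 0" for p
  proof (cases "p \<in> D")
    case True then show ?thesis using g_sc[OF True, of 0] by simp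
  qed (simp add: g_out)
  have "pmod_iso scale V phi ((*) :: 'k \<Rightarrow> 'k \<Rightarrow> 'k) (kB_space D) (kB_map D)"
    unfolding pmod_iso_def
  proof (rule exI[of _ g], intro conjI allI impI ballI)
    fix p
    show "bij_betw (g p) (V p) (kB_space D p)"
    proof (cases "p \<in> D")
      case True
      have ks: "kB_space D p = (UNIV :: 'k set)" unfolding kB_space_def using True by simp
      show ?thesis unfolding ks bij_betw_def
      proof
        show "inj_on (g p) (V p)"
        proof (rule inj_onI)
          fix w1 w2 assume w: "w1 \<in> V p" "w2 \<in> V p" "g p w1 = g p w2"
          obtain c1 where c1: "w1 = scale c1 (f p)" using Vrep[OF w(1)] by blast
          obtain c2 where c2: "w2 = scale c2 (f p)" using Vrep[OF w(2)] by blast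
          have "c1 = c2" using w(3) g_sc[OF True] c1 c2 by simp
          then show "w1 = w2" using c1 c2 by simp
        qed
        have "x \<in> g p ` V p" for x
        proof -
          have "scale x (f p) \<in> V p" using Vscale[OF fVV] .
          moreover have "g p (scale x (f p)) = x" using g_sc[OF True] .
          ultimately show ?thesis by (metis image_eqI)
        qed
        then show "g p ` V p = UNIV" by blast
      qed
    next
      case False
      have ks: "kB_space D p = ({0} :: 'k set)" unfolding kB_space_def using False by simp
      show ?thesis unfolding ks VoutD[OF False] bij_betw_def using g0 by simp
    qed
    show "linear_on scale (*) (V p) (g p)"
      unfolding linear_on_def
    proof (intro conjI ballI allI)
      fix u w assume uw: "u \<in> V p" "w \<in> V p"
      show "g p (u + w) = g p u + g p w"
      proof (cases "p \<in> D")
        case True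
        obtain c1 where c1: "u = scale c1 (f p)" using Vrep[OF uw(1)] by blast
        obtain c2 where c2: "w = scale c2 (f p)" using Vrep[OF uw(2)] by blast
        have "u + w = scale (c1 + c2) (f p)" using c1 c2 by (simp add: vs.scale_left_distrib)
        then show ?thesis using g_sc[OF True] c1 c2 by simp
      qed (simp add: g_out)
    next
      fix c u assume u: "u \<in> V p"
      show "g p (scale c u) = c * g p u"
      proof (cases "p \<in> D")
        case True
        obtain c1 where c1: "u = scale c1 (f p)" using Vrep[OF u] by blast
        have "scale c u = scale (c * c1) (f p)" using c1 by simp
        then show ?thesis using g_sc[OF True] c1 by simp
      qed (simp add: g_out)
    qed
  next
    fix p q v assume pq: "p \<le> q" and v: "v \<in> V p"
    obtain c where c: "v = scale c (f p)" using Vrep[OF v] by blast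
    have pv: "phi p q v = scale c (f q)" using c phi_scale[OF pq fVV] fcc[OF pq] by simp
    show "g q (phi p q v) = kB_map D p q (g p v)"
    proof (cases "p \<in> D")
      case True
      show ?thesis
      proof (cases "q \<in> D")
        case True2: True
        show ?thesis unfolding kB_map_def using True True2 g_sc pv c by simp
      next
        case False
        show ?thesis unfolding kB_map_def using False g_out by simp
      qed
    next
      case False
      then have "v = 0" using VoutD v by blast
      then have "phi p q v = 0" using pq by simp
      then show ?thesis unfolding kB_map_def using False g0 by simp
    qed
  qed
  then show ?thesis unfolding D_def .
qed

end
theorem lemma5p5:
  fixes scale :: "'k::field \<Rightarrow> 'v::ab_group_add \<Rightarrow> 'v"
    and V :: "'s::linorder \<times> 't::linorder \<Rightarrow> 'v set"
    and phi :: "'s \<times> 't \<Rightarrow> 's \<times> 't \<Rightarrow> 'v \<Rightarrow> 'v"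
  assumes "pmodule scale V phi"
    and "pointwise_fin_dim scale V"
    and "middle_exact V phi"
    and "indecomposable scale V phi"
    and "x \<le> x'" and "y \<le> y'"
    and "\<exists>v \<in> V (x, y). v \<noteq> 0 \<and> phi (x, y) (x, y') v = 0 \<and> phi (x, y) (x', y) v = 0"
  shows "\<exists>B. db_block B \<and>
           pmod_iso scale V phi ((*) :: 'k \<Rightarrow> 'k \<Rightarrow> 'k) (kB_space B) (kB_map B)"
proof -
  interpret mx scale V phi by unfold_locales (rule assms)+
  obtain v where v: "v \<in> V (x, y)" "v \<noteq> 0" "phi (x, y) (x, y') v = 0" "phi (x, y) (x', y) v = 0"
    using assms(7) by blast
  have "\<exists>u\<in>V (x,y). u \<noteq> 0 \<and> phi (x,y) (x,y') u = 0 \<and> phi (x,y) (x',y) u = 0 \<and>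
     (\<forall>s t. x \<le> s \<longrightarrow> y \<le> t \<longrightarrow> phi (x,y) (s,y) u \<noteq> 0 \<longrightarrow> phi (x,y) (x,t) u \<noteq> 0 \<longrightarrow> phi (x,y) (s,t) u \<noteq> 0)"
    by (rule L1[OF assms(5,6) v])
  then obtain u where u: "u \<in> V (x,y)" "u \<noteq> 0" "phi (x,y) (x,y') u = 0" "phi (x,y) (x',y) u = 0"
     "\<forall>s t. x \<le> s \<longrightarrow> y \<le> t \<longrightarrow> phi (x,y) (s,y) u \<noteq> 0 \<longrightarrow> phi (x,y) (x,t) u \<noteq> 0 \<longrightarrow> phi (x,y) (s,t) u \<noteq> 0"
    by blast
  have ex: "\<exists>JS JT f. JS \<noteq> {} \<and> JT \<noteq> {} \<and> down_closed JS \<and> down_closed JT \<and> (\<forall>p. f p \<in> V p) \<and>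
     (\<forall>p q. p \<le> q \<longrightarrow> phi p q (f p) = f q) \<and> (\<forall>p. (p \<in> JS \<times> JT) = (f p \<noteq> 0))"
    by (rule L2[OF assms(5,6) u])
  then obtain JS JT f where H: "JS \<noteq> {} \<and> JT \<noteq> {} \<and> down_closed JS \<and> down_closed JT \<and> (\<forall>p. f p \<in> V p) \<and>
     (\<forall>p q. p \<le> q \<longrightarrow> phi p q (f p) = f q) \<and> (\<forall>p. (p \<in> JS \<times> JT) = (f p \<noteq> 0))"
    by (elim exE) (erule that)
  note h = H[THEN conjunct1] H[THEN conjunct2, THEN conjunct1] H[THEN conjunct2, THEN conjunct2, THEN conjunct1]
    H[THEN conjunct2, THEN conjunct2, THEN conjunct2, THEN conjunct1]
    H[THEN conjunct2, THEN conjunct2, THEN conjunct2, THEN conjunct2, THEN conjunct1]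
    H[THEN conjunct2, THEN conjunct2, THEN conjunct2, THEN conjunct2, THEN conjunct2, THEN conjunct1]
    H[THEN conjunct2, THEN conjunct2, THEN conjunct2, THEN conjunct2, THEN conjunct2, THEN conjunct2]
  have iso: "pmod_iso scale V phi ((*) :: 'k \<Rightarrow> 'k \<Rightarrow> 'k) (kB_space (JS \<times> JT)) (kB_map (JS \<times> JT))"
    by (rule L3[OF assms(4) h])
  have "db_block (JS \<times> JT)" unfolding db_block_def
    by (rule exI[of _ JS], rule exI[of _ JT]) (simp add: h(1-4))
  then show ?thesis using iso by (intro exI[of _ "JS \<times> JT"]) simp
qed

end
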